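(* We have $$ \mathrm m(1+x_1+x_2+x_3+x_2x_3) =-\frac1{2\pi}\int_0^1{}_2F_1\left(\tfrac12,\tfrac12;1;1-\frac{x^2}{16}\right)\log x\,dx. $$
   Context: For a nonzero Laurent polynomial $P(x_1,\dots,x_N)$, the (logarithmic) Mahler measure is $\mathrm m(P)=\int_{[0,1]^N}\log|P(e^{2\pi i\theta_1},\dots,e^{2\pi i\theta_N})|\,d\theta_1\cdots d\theta_N$. Here ${}_2F_1(a_1,a_2;b_2;z)=\sum_{n\ge0}\frac{(a_1)_n(a_2)_n}{(b_2)_n}\frac{z^n}{n!}$ is the Gauss hypergeometric function with $(a)_n=\Gamma(a+n)/\Gamma(a)$. *)

theory Defs
  imports "HOL-Analysis.Analysis"
begin

definition mahler_measure3 :: "(complex \<Rightarrow> complex \<Rightarrow> complex \<Rightarrow> complex) \<Rightarrow> real" where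
  "mahler_measure3 P =
     (LINT t : {0..1} \<times> {0..1} \<times> {0..1} | (lborel :: (real \<times> real \<times> real) measure).
        ln (cmod (P (cis (2 * pi * fst t)) (cis (2 * pi * fst (snd t)))
                    (cis (2 * pi * snd (snd t))))))"

definition hyp2F1 :: "real \<Rightarrow> real \<Rightarrow> real \<Rightarrow> real \<Rightarrow> real" where
  "hyp2F1 a1 a2 b2 z =
     (\<Sum>n. pochhammer a1 n * pochhammer a2 n / pochhammer b2 n * z ^ n / fact n)"

end

theory Submission
  imports Defs "HOL-Complex_Analysis.Complex_Analysis"
begin

lemma jensen_aux:
  fixes c :: complex assumes c: "cmod c < 1"
  shows "((\<lambda>t. ln (cmod (1 + c * cis (2*pi*t)))) has_integral 0) {0..1}"
proof -
  define f where "f = (\<lambda>z. Ln (1 + c * z))"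
  have nz: "1 + c * z \<notin> \<real>\<^sub>\<le>\<^sub>0" if "cmod z \<le> 1" for z
  proof -
    have "cmod c * cmod z \<le> cmod c * 1" using that by (intro mult_left_mono) auto
    then have "cmod (c * z) < 1" using c by (simp add: norm_mult)
    then have "Re (c*z) > -1" using abs_Re_le_cmod[of "c*z"] by linarith
    then have "Re (1 + c*z) > 0" by simp
    then show ?thesis by (auto simp: complex_nonpos_Reals_iff)
  qed
  have hol: "f holomorphic_on cball 0 1"
    unfolding f_def using nz by (intro holomorphic_intros) auto
  from Cauchy_integral_circlepath_simple[OF hol, of 0]
  have "((\<lambda>u. f u / (u - 0)) has_contour_integral 2 * complex_of_real pi * \<i> * f 0) (circlepath 0 1)"
    by simp
  then have C: "((\<lambda>x. f (circlepath 0 1 x) / (circlepath 0 1 x - 0) * vector_derivative (circlepath 0 1) (at x within {0..1}))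
      has_integral 0) {0..1}"
    unfolding has_contour_integral_def by (simp add: f_def)
  have "((\<lambda>x. (2 * pi * \<i>) * f (cis (2*pi*x))) has_integral 0) {0..1}"
  proof (rule has_integral_eq[OF _ C])
    fix x :: real assume "x \<in> {0..1}"
    then have vd: "vector_derivative (circlepath 0 1) (at x within {0..1}) = 2 * pi * \<i> * exp(2 * of_real pi * \<i> * x)"
      by (simp add: vector_derivative_circlepath01)
    have "exp(2 * of_real pi * \<i> * x) \<noteq> 0" by simp
    then show "f (circlepath 0 1 x) / (circlepath 0 1 x - 0) * vector_derivative (circlepath 0 1) (at x within {0..1})
       = (2 * pi * \<i>) * f (cis (2*pi*x))"
      unfolding vd by (simp add: circlepath cis_conv_exp mult_ac)
  qed
  from has_integral_mult_right[OF this, of "1 / (2 * pi * \<i>)"]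
  have "((\<lambda>x. (1 / (2 * pi * \<i>)) * ((2 * pi * \<i>) * f (cis (2*pi*x)))) has_integral 0) {0..1}"
    by simp
  moreover have "(1 / (2 * pi * \<i>)) * ((2 * pi * \<i>) * z) = z" for z :: complex
    by (simp add: field_simps)
  ultimately have "((\<lambda>x. f (cis (2*pi*x))) has_integral 0) {0..1}"
    by simp
  from has_integral_linear[OF this bounded_linear_Re]
  have "((\<lambda>x. Re (f (cis (2*pi*x)))) has_integral 0) {0..1}" by (simp add: o_def)
  then show ?thesis
  proof (rule has_integral_eq[rotated])
    fix x
    have "1 + c * cis (2*pi*x) \<noteq> 0" using nz[of "cis (2*pi*x)"] by auto
    then show "Re (f (cis (2*pi*x))) = ln (cmod (1 + c * cis (2*pi*x)))" by (simp add: f_def)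
  qed
qed

lemma jensen_has_integral:
  fixes w :: complex assumes w: "cmod w \<noteq> 1"
  shows "((\<lambda>t. ln (cmod (cis (2*pi*t) + w))) has_integral ln (max 1 (cmod w))) {0..1}"
proof (cases "cmod w < 1")
  case True
  have eq: "cmod (cis x + w) = cmod (1 + cnj w * cis x)" for x
  proof -
    have "cis x * cis (-x) = 1" by (simp add: cis_mult)
    then have "cis x + w = cis x * (1 + w * cis (-x))" by (simp add: algebra_simps)
    then have "cmod (cis x + w) = cmod (1 + w * cis (-x))" by (simp add: norm_mult)
    also have "\<dots> = cmod (cnj (1 + w * cis (-x)))" by (rule complex_mod_cnj[symmetric])
    also have "cnj (1 + w * cis (-x)) = 1 + cnj w * cis x" by (simp add: cis_cnj)
    finally show ?thesis .
  qed
  have "max 1 (cmod w) = 1" using True by simp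
  then show ?thesis using jensen_aux[of "cnj w"] True by (simp add: eq)
next
  case False
  then have w1: "cmod w > 1" using w by simp
  then have w0: "w \<noteq> 0" by auto
  have eq: "ln (cmod (cis x + w)) = ln (cmod w) + ln (cmod (1 + (1/w) * cis x))" for x
  proof -
    have "cis x + w = w * (1 + (1/w) * cis x)" using w0 by (simp add: field_simps)
    moreover have "1 + (1/w) * cis x \<noteq> 0"
    proof
      assume "1 + (1/w) * cis x = 0"
      then have "cis x = - w" using w0 by (simp add: field_simps add_eq_0_iff)
      then show False using w1 by (metis norm_cis norm_minus_cancel less_irrefl)
    qed
    ultimately show ?thesis using w0 by (simp add: norm_mult ln_mult)
  qed
  have "cmod (1/w) < 1" using w1 by (simp add: norm_divide divide_less_eq)
  from has_integral_add[OF has_integral_const_real[of "ln (cmod w)" 0 1] jensen_aux[OF this]]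
  have "((\<lambda>t. ln (cmod w) + ln (cmod (1 + (1/w) * cis (2*pi*t)))) has_integral ln (cmod w)) {0..1}"
    by simp
  then show ?thesis using w1 by (simp add: eq)
qed

definition wA :: "real \<Rightarrow> real" where "wA a = 1 / (pi * sqrt (a * (1 - a)))"

lemma wA_nonneg: "0 \<le> a \<Longrightarrow> a \<le> 1 \<Longrightarrow> wA a \<ge> 0"
  unfolding wA_def by (auto intro!: divide_nonneg_nonneg mult_nonneg_nonneg)

lemma wA_measurable[measurable]: "wA \<in> borel_measurable borel"
  unfolding wA_def by measurable

lemma cos_le_0: "pi/2 \<le> x \<Longrightarrow> x \<le> pi \<Longrightarrow> cos x \<le> 0"
  using cos_ge_zero[of "pi - x"] by simp

lemma cos_lt_0: "pi/2 < x \<Longrightarrow> x < pi \<Longrightarrow> cos x < 0"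
  using cos_gt_zero[of "pi - x"] by simp

lemma cos_sq_deriv: "((\<lambda>s. cos (pi * s)^2) has_real_derivative (- (2*pi*cos(pi * s)* sin(pi * s)))) (at s)"
  by (auto intro!: derivative_eq_intros simp: algebra_simps)

lemma arcsine_half:
  fixes f :: "real \<Rightarrow> ennreal" assumes [measurable]: "f \<in> borel_measurable borel"
  shows "(\<integral>\<^sup>+s. f (cos (pi * s)^2) * indicator {1/2..1} s \<partial>lborel) =
         (\<integral>\<^sup>+a. f a * ennreal (wA a / 2) * indicator {0..1} a \<partial>lborel)"
proof -
  define g' where "g' = (\<lambda>s::real. - (2*pi*cos(pi * s)* sin(pi * s)))"
  have g'nn: "g' s \<ge> 0" if "s \<in> {1/2..1}" for s
  proof -
    have "cos (pi * s) \<le> 0" using that by (intro cos_le_0) auto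
    moreover have "sin (pi * s) \<ge> 0" using that by (intro sin_ge_zero) auto
    ultimately show ?thesis unfolding g'_def by (simp add: mult_nonneg_nonpos2 mult_le_0_iff)
  qed
  have d: "\<And>x. ((\<lambda>s. cos (pi * s)^2) has_real_derivative g' x) (at x)" unfolding g'_def by (rule cos_sq_deriv)
  have c: "continuous_on {1/2..1} g'" unfolding g'_def by (intro continuous_intros)
  have "(\<integral>\<^sup>+a. (f a * ennreal (wA a / 2)) * indicator {cos (pi*(1/2))^2..cos (pi*1)^2} a \<partial>lborel) =
        (\<integral>\<^sup>+s. (f (cos (pi * s)^2) * ennreal (wA (cos (pi * s)^2) / 2)) * g' s * indicator {1/2..1} s \<partial>lborel)"
    by (rule nn_integral_substitution_aux[OF _ _ d c g'nn]) auto
  also have "\<dots> = (\<integral>\<^sup>+s. f (cos (pi * s)^2) * indicator {1/2..1} s \<partial>lborel)"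
  proof (rule nn_integral_cong_AE)
    have "AE s in lborel. s \<notin> {1/2, 1}" by (intro AE_not_in countable_imp_null_set_lborel) auto
    then show "AE s in lborel. (f (cos (pi * s)^2) * ennreal (wA (cos (pi * s)^2) / 2)) * g' s * indicator {1/2..1} s
       = f (cos (pi * s)^2) * indicator {1/2..1} s"
    proof eventually_elim
      case (elim s)
      show ?case
      proof (cases "s \<in> {1/2<..<1}")
        case True
        have c: "cos (pi * s) < 0" using True by (intro cos_lt_0) auto
        have sn: "sin (pi * s) > 0" using True by (intro sin_gt_zero) auto
        have "sqrt (cos (pi * s)^2 * (1 - cos (pi * s)^2)) = - cos (pi * s) * sin (pi * s)"
          using c sn by (simp add: sin_squared_eq[symmetric] real_sqrt_mult abs_mult flip: power_mult_distrib)
        then have "wA (cos (pi * s)^2) / 2 * g' s = 1"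
          using c sn by (simp add: wA_def g'_def field_simps)
        then have "ennreal (wA (cos (pi * s)^2) / 2) * ennreal (g' s) = 1"
          using g'nn[of s] True by (subst ennreal_mult''[symmetric]) auto
        then show ?thesis using True by (simp add: mult.assoc)
      next
        case False
        then show ?thesis using elim by (auto simp: indicator_def)
      qed
    qed
  qed
  finally show ?thesis by simp
qed

lemma two_ennreal_half: "2 * ennreal (x / 2) = ennreal x"
proof (cases "x \<ge> 0")
  case True
  then have "ennreal x = ennreal (2 * (x/2))" by simp
  also have "\<dots> = 2 * ennreal (x/2)" by (subst ennreal_mult') auto
  finally show ?thesis by simp
next
  case False
  then show ?thesis by (simp add: ennreal_neg)
qed

lemma arcsine_subst:
  fixes f :: "real \<Rightarrow> ennreal" assumes [measurable]: "f \<in> borel_measurable borel"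
  shows "(\<integral>\<^sup>+s. f (cos (pi * s)^2) * indicator {0..1} s \<partial>lborel) =
         (\<integral>\<^sup>+a. f a * ennreal (wA a) * indicator {0..1} a \<partial>lborel)"
proof -
  have refl: "(\<integral>\<^sup>+s. f (cos (pi * s)^2) * indicator {0..1/2} s \<partial>lborel) =
        (\<integral>\<^sup>+s. f (cos (pi * s)^2) * indicator {1/2..1} s \<partial>lborel)"
  proof -
    have "(\<integral>\<^sup>+s. f (cos (pi * s)^2) * indicator {1/2..1} s \<partial>lborel) =
       ennreal \<bar>-1\<bar> * (\<integral>\<^sup>+s. f (cos (pi * (1 + (-1) * s))^2) * indicator {1/2..1} (1 + (-1) * s) \<partial>lborel)"
      by (rule nn_integral_real_affine) auto
    also have "\<dots> = (\<integral>\<^sup>+s. f (cos (pi * s)^2) * indicator {0..1/2} s \<partial>lborel)"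
    proof -
      have "cos (pi * (1 + (-1) * s)) = - cos (pi * s)" for s
        by (simp add: algebra_simps cos_diff)
      moreover have "indicator {1/2..1} (1 + (-1) * s) = (indicator {0..1/2} s :: ennreal)" for s :: real
        by (auto simp: indicator_def)
      ultimately show ?thesis by simp
    qed
    finally show ?thesis by simp
  qed
  have "(\<integral>\<^sup>+s. f (cos (pi * s)^2) * indicator {0..1} s \<partial>lborel) =
        (\<integral>\<^sup>+s. f (cos (pi * s)^2) * indicator {0..1/2} s + f (cos (pi * s)^2) * indicator {1/2..1} s \<partial>lborel)"
  proof (rule nn_integral_cong_AE)
    have "AE s in lborel. s \<noteq> 1/2" by (rule AE_lborel_singleton)
    then show "AE s in lborel. f (cos (pi * s)^2) * indicator {0..1} s =
       f (cos (pi * s)^2) * indicator {0..1/2} s + f (cos (pi * s)^2) * indicator {1/2..1} s"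
      by eventually_elim (auto simp: indicator_def)
  qed
  also have "\<dots> = (\<integral>\<^sup>+s. f (cos (pi * s)^2) * indicator {0..1/2} s \<partial>lborel) +
        (\<integral>\<^sup>+s. f (cos (pi * s)^2) * indicator {1/2..1} s \<partial>lborel)"
    by (rule nn_integral_add) auto
  also have "\<dots> = 2 * (\<integral>\<^sup>+a. f a * ennreal (wA a / 2) * indicator {0..1} a \<partial>lborel)"
    unfolding refl arcsine_half[OF assms] by (simp add: mult_2)
  also have "\<dots> = (\<integral>\<^sup>+a. 2 * (f a * ennreal (wA a / 2) * indicator {0..1} a) \<partial>lborel)"
    by (rule nn_integral_cmult[symmetric]) auto
  also have "\<dots> = (\<integral>\<^sup>+a. f a * ennreal (wA a) * indicator {0..1} a \<partial>lborel)"
  proof (intro nn_integral_cong)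
    fix a :: real
    have "2 * (f a * ennreal (wA a / 2) * indicator {0..1} a) = f a * (2 * ennreal (wA a / 2)) * indicator {0..1} a"
      by (simp only: ac_simps)
    then show "2 * (f a * ennreal (wA a / 2) * indicator {0..1} a) = f a * ennreal (wA a) * indicator {0..1} a"
      by (simp only: two_ennreal_half)
  qed
  finally show ?thesis .
qed

definition cH :: "nat \<Rightarrow> real" where "cH n = pochhammer (1/2) n / fact n"

lemma cH_nonneg: "cH n \<ge> 0"
  unfolding cH_def by (intro divide_nonneg_nonneg pochhammer_nonneg) auto

lemma poch_half_le: "pochhammer (1/2::real) n \<le> fact n"
proof (induction n)
  case (Suc n)
  have "pochhammer (1/2::real) (Suc n) = pochhammer (1/2) n * (1/2 + real n)" by (simp add: pochhammer_Suc)
  also have "\<dots> \<le> fact n * (real n + 1)"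
    using Suc by (intro mult_mono) (auto intro: pochhammer_nonneg)
  also have "\<dots> = fact (Suc n)" by (simp add: algebra_simps)
  finally show ?case .
qed simp

lemma cH_le1: "cH n \<le> 1"
  unfolding cH_def using poch_half_le[of n] by (simp add: divide_le_eq_1)

lemma hyp_term: "pochhammer (1/2) n * pochhammer (1/2) n / pochhammer 1 n * z ^ n / fact n = (cH n)^2 * z^n"
  by (simp add: cH_def pochhammer_fact[symmetric] power2_eq_square field_simps)

lemma H_sums:
  assumes "0 \<le> z" "z < 1"
  shows "(\<lambda>n. (cH n)^2 * z^n) sums hyp2F1 (1/2) (1/2) 1 z"
proof -
  have "summable (\<lambda>n. (cH n)^2 * z^n)"
  proof (rule summable_comparison_test'[OF summable_geometric[of z]])
    fix n :: nat
    have "(cH n)^2 \<le> 1" using cH_nonneg[of n] cH_le1[of n] by (simp add: power_le_one)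
    then have "(cH n)^2 * z^n \<le> 1 * z^n" using assms by (intro mult_right_mono) auto
    then show "norm ((cH n)^2 * z^n) \<le> z^n" using assms by simp
  qed (use assms in auto)
  then show ?thesis unfolding hyp2F1_def hyp_term by (simp add: summable_sums)
qed

lemma Beta_half: "Beta (real n + 1/2) (1/2) = pi * cH n"
proof (induction n)
  case 0
  have "Beta (1/2) (1/2) = pi"
    by (simp add: Beta_altdef Gamma_one_half_real)
  then show ?case by (simp add: cH_def)
next
  case (Suc n)
  have nz: "real n + 1/2 \<notin> \<int>\<^sub>\<le>\<^sub>0" by (auto dest: nonpos_Ints_nonpos)
  from Beta_plus1_left[OF nz, of "1/2"]
  have "(real n + 1) * Beta (real n + 1/2 + 1) (1/2) = (real n + 1/2) * Beta (real n + 1/2) (1/2)"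
    by (simp add: algebra_simps)
  then have "Beta (real (Suc n) + 1/2) (1/2) = (real n + 1/2) * (pi * cH n) / (real n + 1)"
    using Suc by (simp add: field_simps)
  also have "\<dots> = pi * cH (Suc n)"
    by (simp add: cH_def pochhammer_Suc field_simps)
  finally show ?case .
qed

lemma Beta_nn:
  "(\<integral>\<^sup>+y. ennreal (y ^ n * (y powr (-1/2) * (1 - y) powr (-1/2))) * indicator {0..1} y \<partial>lborel)
     = ennreal (pi * cH n)"
proof -
  have "((\<lambda>t. t powr (real n + 1/2 - 1) * (1 - t) powr (1/2 - 1)) has_integral Beta (real n + 1/2) (1/2)) {0..1}"
    by (rule has_integral_Beta_real) auto
  from nn_integral_has_integral_lebesgue'[OF _ this]
  have "(\<integral>\<^sup>+t. ennreal (t powr (real n + 1/2 - 1) * (1 - t) powr (1/2 - 1)) * indicator {0..1} t \<partial>lborel)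
      = ennreal (Beta (real n + 1/2) (1/2))" by auto
  also have "\<dots> = ennreal (pi * cH n)" by (simp add: Beta_half)
  finally have eq: "(\<integral>\<^sup>+t. ennreal (t powr (real n + 1/2 - 1) * (1 - t) powr (1/2 - 1)) * indicator {0..1} t \<partial>lborel)
      = ennreal (pi * cH n)" .
  show ?thesis
  proof (subst eq[symmetric], rule nn_integral_cong_AE)
    have "AE y in lborel. y \<noteq> 0" by (rule AE_lborel_singleton)
    then show "AE y in lborel. ennreal (y ^ n * (y powr (-1/2) * (1 - y) powr (-1/2))) * indicator {0..1} y =
      ennreal (y powr (real n + 1/2 - 1) * (1 - y) powr (1/2 - 1)) * indicator {0..1} y"
    proof eventually_elim
      case (elim y)
      show ?case
      proof (cases "y \<in> {0..1}")
        case True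
        then have "y > 0" using elim by auto
        then have "y ^ n * y powr (-1/2) = y powr (real n + 1/2 - 1)"
          by (simp add: powr_realpow[symmetric] powr_add[symmetric])
        then show ?thesis by (simp add: mult.assoc[symmetric])
      qed simp
    qed
  qed
qed

lemma binom_half_sums:
  assumes "0 \<le> z" "z < 1" "0 \<le> y" "y < 1"
  shows "(\<lambda>n. cH n * z^n * y^n) sums (1 - z*y) powr (-1/2)"
proof -
  have "z * y < 1"
  proof -
    have "z * y \<le> z * 1" using assms by (intro mult_left_mono) auto
    then show ?thesis using assms by simp
  qed
  then have "\<bar>-(z*y)\<bar> < 1" using assms by simp
  from gen_binomial_real[OF this, of "-1/2"]
  have "(\<lambda>n. ((-1/2) gchoose n) * (-(z*y))^n) sums (1 + -(z*y)) powr (-1/2)" .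
  moreover have "((-1/2) gchoose n) * (-(z*y))^n = cH n * z^n * y^n" for n
  proof -
    have "(-(z*y))^n = (-1)^n * (z^n * y^n)" by (simp add: power_minus[of "z*y"] power_mult_distrib)
    then have "((-1/2::real) gchoose n) * (-(z*y))^n = ((-1)^n * (-1)^n) * (pochhammer (1/2) n / fact n) * (z^n * y^n)"
      by (simp add: gbinomial_pochhammer)
    also have "(-1::real)^n * (-1)^n = 1" by (simp flip: power_add)
    finally show ?thesis by (simp add: cH_def mult_ac)
  qed
  ultimately show ?thesis by simp
qed

lemma series_int:
  assumes "0 \<le> z" "z < 1"
  shows "(\<integral>\<^sup>+y. ennreal ((1 - z*y) powr (-1/2) * (y powr (-1/2) * (1 - y) powr (-1/2))) * indicator {0..1} y \<partial>lborel)
     = ennreal (pi * hyp2F1 (1/2) (1/2) 1 z)"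
proof -
  define Y where "Y = (\<lambda>y::real. y powr (-1/2) * (1 - y) powr (-1/2))"
  have Ynn: "Y y \<ge> 0" for y unfolding Y_def by simp
  have "(\<integral>\<^sup>+y. ennreal ((1 - z*y) powr (-1/2) * Y y) * indicator {0..1} y \<partial>lborel) =
        (\<integral>\<^sup>+y. (\<Sum>n. ennreal (cH n * z^n * (y^n * Y y)) * indicator {0..1} y) \<partial>lborel)"
  proof (rule nn_integral_cong_AE)
    have "AE y in lborel. y \<noteq> 1" by (rule AE_lborel_singleton)
    then show "AE y in lborel. ennreal ((1 - z*y) powr (-1/2) * Y y) * indicator {0..1} y =
       (\<Sum>n. ennreal (cH n * z^n * (y^n * Y y)) * indicator {0..1} y)"
    proof eventually_elim
      case (elim y)
      show ?case
      proof (cases "y \<in> {0..1}")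
        case True
        then have "y < 1" using elim by auto
        from sums_mult2[OF binom_half_sums[OF assms(1,2) _ this], of "Y y"] True
        have "(\<lambda>n. cH n * z^n * y^n * Y y) sums ((1 - z*y) powr (-1/2) * Y y)" by auto
        then have "(\<Sum>n. ennreal (cH n * z^n * y^n * Y y)) = ennreal ((1 - z*y) powr (-1/2) * Y y)"
          using True assms Ynn[of y] cH_nonneg by (intro suminf_ennreal_eq) auto
        then show ?thesis using True by (simp add: mult_ac)
      qed simp
    qed
  qed
  also have "\<dots> = (\<Sum>n. \<integral>\<^sup>+y. ennreal (cH n * z^n * (y^n * Y y)) * indicator {0..1} y \<partial>lborel)"
    by (rule nn_integral_suminf) (auto simp: Y_def)
  also have "\<dots> = (\<Sum>n. ennreal (pi * ((cH n)^2 * z^n)))"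
  proof (rule suminf_cong)
    fix n
    have "(\<integral>\<^sup>+y. ennreal (cH n * z^n * (y^n * Y y)) * indicator {0..1} y \<partial>lborel) =
          (\<integral>\<^sup>+y. ennreal (cH n * z^n) * (ennreal (y^n * Y y) * indicator {0..1} y) \<partial>lborel)"
    proof (intro nn_integral_cong)
      fix y :: real
      have "ennreal (cH n * z^n * (y^n * Y y)) = ennreal (cH n * z^n) * ennreal (y^n * Y y)"
        using cH_nonneg[of n] assms by (intro ennreal_mult') auto
      then show "ennreal (cH n * z^n * (y^n * Y y)) * indicator {0..1} y = ennreal (cH n * z^n) * (ennreal (y^n * Y y) * indicator {0..1} y)"
        by (simp add: mult.assoc)
    qed
    also have "\<dots> = ennreal (cH n * z^n) * (\<integral>\<^sup>+y. ennreal (y^n * Y y) * indicator {0..1} y \<partial>lborel)"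
      by (rule nn_integral_cmult) (auto simp: Y_def)
    also have "\<dots> = ennreal (cH n * z^n) * ennreal (pi * cH n)"
      unfolding Y_def Beta_nn by simp
    also have "\<dots> = ennreal (pi * ((cH n)^2 * z^n))"
      using cH_nonneg[of n] assms by (simp flip: ennreal_mult add: power2_eq_square mult_ac)
    finally show "(\<integral>\<^sup>+y. ennreal (cH n * z^n * (y^n * Y y)) * indicator {0..1} y \<partial>lborel) = ennreal (pi * ((cH n)^2 * z^n))" .
  qed
  also have "\<dots> = ennreal (pi * hyp2F1 (1/2) (1/2) 1 z)"
    using assms by (intro suminf_ennreal_eq sums_mult H_sums) auto
  finally show ?thesis unfolding Y_def .
qed

lemma powr_mhalf: "x > 0 \<Longrightarrow> x powr (-1/2) = 1 / sqrt x"
  by (simp add: powr_minus_divide powr_half_sqrt[symmetric] powr_minus)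

lemma K_alg:
  fixes g y :: real
  assumes g: "0 < g" "g < 1" and y: "0 < y" "y < 1"
  defines "z \<equiv> 1 - g"
  defines "a \<equiv> 1 - z * y"
  shows "z * (wA a * wA (g / a) / a) =
          1 / (pi^2 * sqrt g) * ((1 - z*y) powr (-1/2) * (y powr (-1/2) * (1 - y) powr (-1/2)))"
proof -
  have z: "0 < z" "z < 1" using g by (auto simp: z_def)
  have "z * y < 1 * 1" using z y by (intro mult_strict_mono) auto
  then have a: "0 < a" using z y by (auto simp: a_def)
  have a1: "1 - a = z * y" by (simp add: a_def)
  have ag: "a - g = z * (1 - y)" by (simp add: a_def z_def algebra_simps)
  have s1: "sqrt (a * (1 - a)) = sqrt a * sqrt z * sqrt y"
    by (simp add: a1 real_sqrt_mult)
  have "(g / a) * (1 - g / a) = g * (a - g) / a^2" using a by (simp add: field_simps power2_eq_square)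
  then have S: "sqrt ((g / a) * (1 - g / a)) = sqrt g * sqrt z * sqrt (1 - y) / a"
    using a by (simp add: ag real_sqrt_mult real_sqrt_divide)
  have "wA (g / a) = a / (pi * (sqrt g * sqrt z * sqrt (1 - y)))"
    unfolding wA_def S using a by simp
  moreover have "wA a = 1 / (pi * (sqrt a * sqrt z * sqrt y))" unfolding wA_def s1 by simp
  ultimately have "z * (wA a * wA (g / a) / a) = z * ((1 / (pi * (sqrt a * sqrt z * sqrt y))) * (a / (pi * (sqrt g * sqrt z * sqrt (1 - y)))) / a)"
    by simp
  also have "\<dots> = (sqrt z)^2 * ((1 / (pi * (sqrt a * sqrt z * sqrt y))) * (a / (pi * (sqrt g * sqrt z * sqrt (1 - y)))) / a)"
    using z by simp
  also have "\<dots> = 1 / (pi^2 * sqrt g) * (1 / sqrt a * (1 / sqrt y * (1 / sqrt (1 - y))))"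
    using z a y g by (simp add: field_simps power2_eq_square)
  also have "\<dots> = 1 / (pi^2 * sqrt g) * ((1 - z*y) powr (-1/2) * (y powr (-1/2) * (1 - y) powr (-1/2)))"
  proof -
    have p1: "(1 - z*y) powr (-1/2) = 1 / sqrt (1 - z*y)" using a by (intro powr_mhalf) (simp add: a_def)
    have p2: "y powr (-1/2) = 1 / sqrt y" using y by (intro powr_mhalf) simp
    have p3: "(1 - y) powr (-1/2) = 1 / sqrt (1 - y)" using y by (intro powr_mhalf) simp
    show ?thesis unfolding p1 p2 p3 a_def by simp
  qed
  finally show ?thesis .
qed

lemma density:
  fixes g :: real assumes g: "0 < g" "g < 1"
  shows "(\<integral>\<^sup>+a. ennreal (wA a * wA (g / a) / a) * indicator {g..1} a \<partial>lborel) =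
         ennreal (hyp2F1 (1/2) (1/2) 1 (1 - g) / (pi * sqrt g))"
proof -
  define z where "z = 1 - g"
  have z: "0 < z" "z < 1" using g by (auto simp: z_def)
  define K where "K = (\<lambda>a. wA a * wA (g / a) / a)"
  define C where "C = 1 / (pi^2 * sqrt g)"
  have C: "C \<ge> 0" unfolding C_def using g by simp
  have "(\<integral>\<^sup>+a. ennreal (K a) * indicator {g..1} a \<partial>lborel) =
        ennreal \<bar>-z\<bar> * (\<integral>\<^sup>+y. ennreal (K (1 + (-z) * y)) * indicator {g..1} (1 + (-z) * y) \<partial>lborel)"
    by (rule nn_integral_real_affine) (use z in \<open>auto simp: K_def\<close>)
  also have "(\<lambda>y. indicator {g..1} (1 + (-z) * y) :: ennreal) = indicator {0..1}"
  proof
    fix y :: real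
    have "(g \<le> 1 + (-z) * y \<and> 1 + (-z) * y \<le> 1) \<longleftrightarrow> (0 \<le> y \<and> y \<le> 1)"
    proof -
      have "g \<le> 1 + (-z) * y \<longleftrightarrow> z * y \<le> z * 1" by (simp add: z_def algebra_simps)
      also have "\<dots> \<longleftrightarrow> y \<le> 1" using z by simp
      finally have 1: "g \<le> 1 + (-z) * y \<longleftrightarrow> y \<le> 1" .
      have "1 + (-z) * y \<le> 1 \<longleftrightarrow> 0 \<le> z * y" by simp
      also have "\<dots> \<longleftrightarrow> 0 \<le> y" using z by (simp add: zero_le_mult_iff)
      finally show ?thesis using 1 by blast
    qed
    then show "indicator {g..1} (1 + (-z) * y) = (indicator {0..1} y :: ennreal)"
      by (simp add: indicator_def)
  qed
  also have "ennreal \<bar>-z\<bar> * (\<integral>\<^sup>+y. ennreal (K (1 + (-z) * y)) * indicator {0..1} y \<partial>lborel) =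
      (\<integral>\<^sup>+y. ennreal z * (ennreal (K (1 + (-z) * y)) * indicator {0..1} y) \<partial>lborel)"
    using z by (subst nn_integral_cmult) (auto simp: K_def)
  also have "\<dots> = (\<integral>\<^sup>+y. ennreal C * (ennreal ((1 - z*y) powr (-1/2) * (y powr (-1/2) * (1 - y) powr (-1/2))) * indicator {0..1} y) \<partial>lborel)"
  proof (rule nn_integral_cong_AE)
    have "AE y in lborel. y \<notin> {0, 1}" by (intro AE_not_in countable_imp_null_set_lborel) auto
    then show "AE y in lborel. ennreal z * (ennreal (K (1 + (-z) * y)) * indicator {0..1} y) =
       ennreal C * (ennreal ((1 - z*y) powr (-1/2) * (y powr (-1/2) * (1 - y) powr (-1/2))) * indicator {0..1} y)"
    proof eventually_elim
      case (elim y)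
      show ?case
      proof (cases "y \<in> {0..1}")
        case True
        then have y: "0 < y" "y < 1" using elim by auto
        have "z * K (1 + (-z) * y) = C * ((1 - z*y) powr (-1/2) * (y powr (-1/2) * (1 - y) powr (-1/2)))"
        proof -
          have e: "1 + (-z) * y = 1 - z * y" by simp
          show ?thesis using K_alg[OF g y, folded z_def] unfolding e K_def C_def by simp
        qed
        moreover have "ennreal z * ennreal (K (1 + (-z) * y)) = ennreal (z * K (1 + (-z) * y))"
          using z by (simp add: ennreal_mult')
        moreover have "ennreal C * ennreal ((1 - z*y) powr (-1/2) * (y powr (-1/2) * (1 - y) powr (-1/2))) =
            ennreal (C * ((1 - z*y) powr (-1/2) * (y powr (-1/2) * (1 - y) powr (-1/2))))"
          using C by (simp add: ennreal_mult')
        ultimately show ?thesis using True by (simp add: mult.assoc[symmetric])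
      qed simp
    qed
  qed
  also have "\<dots> = ennreal C * ennreal (pi * hyp2F1 (1/2) (1/2) 1 z)"
    using z by (subst nn_integral_cmult) (auto simp only: series_int less_imp_le, simp)
  also have "\<dots> = ennreal (hyp2F1 (1/2) (1/2) 1 (1 - g) / (pi * sqrt g))"
    using C by (simp flip: ennreal_mult' add: C_def z_def power2_eq_square)
  finally show ?thesis unfolding K_def .
qed

definition Psi :: "real \<Rightarrow> real" where "Psi g = - ln (min 1 (4 * sqrt g))"

lemma Psi_measurable[measurable]: "Psi \<in> borel_measurable borel"
  unfolding Psi_def by measurable

lemma wA_div_nonneg: "0 \<le> g \<Longrightarrow> g \<le> a \<Longrightarrow> 0 \<le> wA (g / a) / a"
proof (cases "a = 0")
  case False
  assume g: "0 \<le> g" "g \<le> a"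
  with False have a: "0 < a" by auto
  then have "g / a \<le> 1" "0 \<le> g / a" using g by auto
  then have "wA (g / a) \<ge> 0" by (rule_tac wA_nonneg) auto
  then show ?thesis using a by simp
qed simp

lemma pred_tri[measurable]: "Measurable.pred (borel \<Otimes>\<^sub>M borel) (\<lambda>x::real\<times>real. snd x \<in> {0..fst x})"
  unfolding atLeastAtMost_iff by measurable

lemma inner_scale:
  fixes a :: real assumes a: "0 < a"
  shows "(\<integral>\<^sup>+b. ennreal (Psi (a * b)) * ennreal (wA b) * indicator {0..1} b \<partial>lborel) =
         (\<integral>\<^sup>+g. ennreal (Psi g) * ennreal (wA (g / a) / a) * indicator {0..a} g \<partial>lborel)"
proof -
  have "(\<integral>\<^sup>+g. ennreal (Psi g) * ennreal (wA (g / a) / a) * indicator {0..a} g \<partial>lborel) =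
    ennreal \<bar>a\<bar> * (\<integral>\<^sup>+b. ennreal (Psi (0 + a * b)) * ennreal (wA ((0 + a * b) / a) / a) * indicator {0..a} (0 + a * b) \<partial>lborel)"
    by (rule nn_integral_real_affine) (use a in auto)
  also have "\<dots> = (\<integral>\<^sup>+b. ennreal a * (ennreal (Psi (0 + a * b)) * ennreal (wA ((0 + a * b) / a) / a) * indicator {0..a} (0 + a * b)) \<partial>lborel)"
    using a by (subst nn_integral_cmult) auto
  also have "\<dots> = (\<integral>\<^sup>+b. ennreal (Psi (a * b)) * ennreal (wA b) * indicator {0..1} b \<partial>lborel)"
  proof (intro nn_integral_cong)
    fix b :: real
    show "ennreal a * (ennreal (Psi (0 + a * b)) * ennreal (wA ((0 + a * b) / a) / a) * indicator {0..a} (0 + a * b)) =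
          ennreal (Psi (a * b)) * ennreal (wA b) * indicator {0..1} b"
    proof (cases "b \<in> {0..1}")
      case True
      then have "a * b \<in> {0..a}" using a by (auto simp: mult_le_cancel_left1)
      moreover have "ennreal a * ennreal (wA b / a) = ennreal (wA b)"
        using a wA_nonneg[of b] True by (simp flip: ennreal_mult')
      moreover have "ennreal a * (ennreal (Psi (a * b)) * ennreal (wA b / a) * 1) = ennreal (Psi (a * b)) * (ennreal a * ennreal (wA b / a))"
        by (simp add: ac_simps)
      ultimately show ?thesis using a True by (simp add: mult_ac)
    next
      case False
      then have "a * b \<notin> {0..a}" using a by (auto simp: mult_le_cancel_left1 zero_le_mult_iff)
      then show ?thesis using False by simp
    qed
  qed
  finally show ?thesis by simp
qed

lemma N2:
  "(\<integral>\<^sup>+a. (\<integral>\<^sup>+b. ennreal (Psi (a * b)) * ennreal (wA b) * indicator {0..1} b \<partial>lborel) * ennreal (wA a) * indicator {0..1} a \<partial>lborel)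
   = (\<integral>\<^sup>+g. ennreal (Psi g) * ennreal (hyp2F1 (1/2) (1/2) 1 (1 - g) / (pi * sqrt g)) * indicator {0..1} g \<partial>lborel)"
proof -
  have "(\<integral>\<^sup>+a. (\<integral>\<^sup>+b. ennreal (Psi (a * b)) * ennreal (wA b) * indicator {0..1} b \<partial>lborel) * ennreal (wA a) * indicator {0..1} a \<partial>lborel)
     = (\<integral>\<^sup>+a. (\<integral>\<^sup>+g. ennreal (Psi g) * ennreal (wA (g / a) / a) * indicator {0..a} g \<partial>lborel) * ennreal (wA a) * indicator {0..1} a \<partial>lborel)"
  proof (rule nn_integral_cong_AE)
    have "AE a in lborel. a \<noteq> 0" by (rule AE_lborel_singleton)
    then show "AE a in lborel. (\<integral>\<^sup>+b. ennreal (Psi (a * b)) * ennreal (wA b) * indicator {0..1} b \<partial>lborel) * ennreal (wA a) * indicator {0..1} a =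
       (\<integral>\<^sup>+g. ennreal (Psi g) * ennreal (wA (g / a) / a) * indicator {0..a} g \<partial>lborel) * ennreal (wA a) * indicator {0..1} a"
    proof eventually_elim
      case (elim a)
      show ?case
      proof (cases "a \<in> {0..1}")
        case True
        then have "0 < a" using elim by auto
        then show ?thesis by (simp add: inner_scale)
      qed simp
    qed
  qed
  also have "\<dots> = (\<integral>\<^sup>+a. \<integral>\<^sup>+g. ennreal (Psi g) * ennreal (wA (g / a) / a) * indicator {0..a} g * (ennreal (wA a) * indicator {0..1} a) \<partial>lborel \<partial>lborel)"
    by (intro nn_integral_cong, subst nn_integral_multc) (auto simp: mult.assoc)
  also have "\<dots> = (\<integral>\<^sup>+g. \<integral>\<^sup>+a. ennreal (Psi g) * ennreal (wA (g / a) / a) * indicator {0..a} g * (ennreal (wA a) * indicator {0..1} a) \<partial>lborel \<partial>lborel)"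
    by (rule lborel_pair.Fubini'[symmetric]) measurable
  also have "\<dots> = (\<integral>\<^sup>+g. (ennreal (Psi g) * indicator {0..1} g) * \<integral>\<^sup>+a. ennreal (wA a * wA (g / a) / a) * indicator {g..1} a \<partial>lborel \<partial>lborel)"
  proof (intro nn_integral_cong)
    fix g :: real
    have "(\<integral>\<^sup>+a. ennreal (Psi g) * ennreal (wA (g / a) / a) * indicator {0..a} g * (ennreal (wA a) * indicator {0..1} a) \<partial>lborel) =
          (\<integral>\<^sup>+a. (ennreal (Psi g) * indicator {0..1} g) * (ennreal (wA a * wA (g / a) / a) * indicator {g..1} a) \<partial>lborel)"
    proof (intro nn_integral_cong)
      fix a :: real
      show "ennreal (Psi g) * ennreal (wA (g / a) / a) * indicator {0..a} g * (ennreal (wA a) * indicator {0..1} a) =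
            (ennreal (Psi g) * indicator {0..1} g) * (ennreal (wA a * wA (g / a) / a) * indicator {g..1} a)"
      proof (cases "0 \<le> g \<and> g \<le> a \<and> a \<le> 1")
        case True
        have E: "ennreal (wA (g / a) / a) * ennreal (wA a) = ennreal (wA a * wA (g / a) / a)"
        proof -
          have "ennreal (wA a * (wA (g/a)/a)) = ennreal (wA a) * ennreal (wA (g/a)/a)"
            using wA_div_nonneg[of g a] True by (intro ennreal_mult'') auto
          then show ?thesis by (simp add: mult.commute)
        qed
        have "ennreal (Psi g) * ennreal (wA (g / a) / a) * indicator {0..a} g * (ennreal (wA a) * indicator {0..1} a)
           = ennreal (Psi g) * (ennreal (wA (g / a) / a) * ennreal (wA a))"
          using True by (simp add: ac_simps)
        also have "\<dots> = (ennreal (Psi g) * indicator {0..1} g) * (ennreal (wA a * wA (g / a) / a) * indicator {g..1} a)"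
          unfolding E using True by simp
        finally show ?thesis .
      next
        case False
        then show ?thesis by (auto simp: indicator_def)
      qed
    qed
    also have "\<dots> = (ennreal (Psi g) * indicator {0..1} g) * \<integral>\<^sup>+a. ennreal (wA a * wA (g / a) / a) * indicator {g..1} a \<partial>lborel"
      by (rule nn_integral_cmult) measurable
    finally show "(\<integral>\<^sup>+a. ennreal (Psi g) * ennreal (wA (g / a) / a) * indicator {0..a} g * (ennreal (wA a) * indicator {0..1} a) \<partial>lborel) =
          (ennreal (Psi g) * indicator {0..1} g) * \<integral>\<^sup>+a. ennreal (wA a * wA (g / a) / a) * indicator {g..1} a \<partial>lborel" .
  qed
  also have "\<dots> = (\<integral>\<^sup>+g. ennreal (Psi g) * ennreal (hyp2F1 (1/2) (1/2) 1 (1 - g) / (pi * sqrt g)) * indicator {0..1} g \<partial>lborel)"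
  proof (rule nn_integral_cong_AE)
    have "AE g in lborel. g \<notin> {0, 1}" by (intro AE_not_in countable_imp_null_set_lborel) auto
    then show "AE g in lborel. (ennreal (Psi g) * indicator {0..1} g) * (\<integral>\<^sup>+a. ennreal (wA a * wA (g / a) / a) * indicator {g..1} a \<partial>lborel) =
      ennreal (Psi g) * ennreal (hyp2F1 (1/2) (1/2) 1 (1 - g) / (pi * sqrt g)) * indicator {0..1} g"
    proof eventually_elim
      case (elim g)
      show ?case
      proof (cases "g \<in> {0..1}")
        case True
        then have "0 < g" "g < 1" using elim by auto
        then show ?thesis using True by (simp only: density) simp
      qed simp
    qed
  qed
  finally show ?thesis .
qed

lemma H_nonneg: assumes "0 \<le> z" "z < 1" shows "0 \<le> hyp2F1 (1/2) (1/2) 1 z"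
proof -
  from H_sums[OF assms] have "summable (\<lambda>n. (cH n)^2 * z^n)" and "hyp2F1 (1/2) (1/2) 1 z = (\<Sum>n. (cH n)^2 * z^n)"
    by (auto simp: sums_iff)
  then show ?thesis using assms by (simp add: suminf_nonneg)
qed

lemma hyp2F1_measurable[measurable]: "(\<lambda>z. hyp2F1 a b c z) \<in> borel_measurable borel"
  unfolding hyp2F1_def by measurable

lemma Psi_zero: "g \<ge> 1/16 \<Longrightarrow> Psi g = 0"
proof -
  assume "g \<ge> 1/16"
  then have "sqrt g \<ge> sqrt (1/16)" by (rule real_sqrt_le_mono)
  moreover have "sqrt (1/16::real) = 1/4" by (simp add: real_sqrt_divide)
  ultimately have "4 * sqrt g \<ge> 1" by simp
  then show "Psi g = 0" by (simp add: Psi_def)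
qed

lemma N1:
  "(\<integral>\<^sup>+g. ennreal (Psi g) * ennreal (hyp2F1 (1/2) (1/2) 1 (1 - g) / (pi * sqrt g)) * indicator {0..1} g \<partial>lborel)
   = (\<integral>\<^sup>+x. ennreal (1 / (2*pi)) * ennreal (indicator {0..1} x * (- (hyp2F1 (1/2) (1/2) 1 (1 - x^2/16) * ln x))) \<partial>lborel)"
proof -
  define F where "F = (\<lambda>g. ennreal (Psi g) * ennreal (hyp2F1 (1/2) (1/2) 1 (1 - g) / (pi * sqrt g)))"
  have "(\<integral>\<^sup>+g. F g * indicator {0..1} g \<partial>lborel) = (\<integral>\<^sup>+g. F g * indicator {(0::real)^2/16..1^2/16} g \<partial>lborel)"
  proof (intro nn_integral_cong)
    fix g :: real
    show "F g * indicator {0..1} g = F g * indicator {(0::real)^2/16..1^2/16} g"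
      by (cases "g \<le> 1/16") (auto simp: F_def indicator_def Psi_zero)
  qed
  also have "\<dots> = (\<integral>\<^sup>+x. F (x^2/16) * (x / 8) * indicator {0..1} x \<partial>lborel)"
    by (rule nn_integral_substitution_aux)
       (auto simp: F_def intro!: derivative_eq_intros continuous_intros)
  also have "\<dots> = (\<integral>\<^sup>+x. ennreal (1 / (2*pi)) * ennreal (indicator {0..1} x * (- (hyp2F1 (1/2) (1/2) 1 (1 - x^2/16) * ln x))) \<partial>lborel)"
  proof (rule nn_integral_cong_AE)
    have "AE x in lborel. x \<noteq> 0" by (rule AE_lborel_singleton)
    then show "AE x in lborel. F (x^2/16) * ennreal (x / 8) * indicator {0..1} x =
       ennreal (1 / (2*pi)) * ennreal (indicator {0..1} x * (- (hyp2F1 (1/2) (1/2) 1 (1 - x^2/16) * ln x)))"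
    proof eventually_elim
      case (elim x)
      show ?case
      proof (cases "x \<in> {0..1}")
        case True
        then have x: "0 < x" "x \<le> 1" using elim by auto
        define h where "h = hyp2F1 (1/2) (1/2) 1 (1 - x^2/16)"
        have "x^2 \<le> 1" using x by (simp add: power_le_one)
        then have h: "0 \<le> h" unfolding h_def using x by (intro H_nonneg) auto
        have sq: "sqrt (x^2/16) = x / 4" using x by (simp add: real_sqrt_divide)
        have psi: "Psi (x^2/16) = - ln x" unfolding Psi_def sq using x by simp
        have lnx: "- ln x \<ge> 0" using x by simp
        have "F (x^2/16) * ennreal (x / 8) = ennreal (- ln x) * ennreal (h / (pi * (x/4))) * ennreal (x/8)"
          unfolding F_def psi sq h_def by simp
        also have "\<dots> = ennreal (- ln x * (h / (pi * (x/4))) * (x/8))"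
        proof -
          have B: "0 \<le> h / (pi * (x/4))" using h x by simp
          have C: "0 \<le> x / 8" using x by simp
          have "ennreal (- ln x * (h / (pi * (x/4))) * (x/8)) = ennreal (- ln x * (h / (pi * (x/4)))) * ennreal (x/8)"
            using lnx B C by (intro ennreal_mult mult_nonneg_nonneg) auto
          also have "ennreal (- ln x * (h / (pi * (x/4)))) = ennreal (- ln x) * ennreal (h / (pi * (x/4)))"
            using lnx B by (intro ennreal_mult) auto
          finally show ?thesis by simp
        qed
        also have "- ln x * (h / (pi * (x/4))) * (x/8) = 1 / (2*pi) * (- (h * ln x))"
          using x by (simp add: field_simps)
        also have "ennreal \<dots> = ennreal (1 / (2*pi)) * ennreal (- (h * ln x))"
          by (rule ennreal_mult') simp
        finally show ?thesis using True by (simp add: h_def)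
      qed simp
    qed
  qed
  finally show ?thesis unfolding F_def .
qed

definition lp :: "real \<Rightarrow> real" where "lp x = ln (max 1 x)"
definition lm :: "real \<Rightarrow> real" where "lm x = - ln (min 1 x)"

lemma lp_nonneg: "lp x \<ge> 0" unfolding lp_def by simp
lemma lm_nonneg: "x \<ge> 0 \<Longrightarrow> lm x \<ge> 0" unfolding lm_def
  by (cases "x = 0") (auto simp: min_def)

lemma lp_lm: "x > 0 \<Longrightarrow> ln x = lp x - lm x"
  unfolding lp_def lm_def by (cases "x \<le> 1") (auto simp: max_def min_def)

lemma lp_measurable[measurable]: "lp \<in> borel_measurable borel" unfolding lp_def by measurable
lemma lm_measurable[measurable]: "lm \<in> borel_measurable borel" unfolding lm_def by measurable

definition Iw :: "(real \<Rightarrow> real) \<Rightarrow> ennreal" where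
  "Iw \<phi> = (\<integral>\<^sup>+a. ennreal (\<phi> (2 * sqrt a)) * ennreal (wA a) * indicator {0..1} a \<partial>lborel)"

lemma wA_reflect: "wA (1 - a) = wA a" unfolding wA_def by (simp add: mult.commute)

lemma cos_form:
  assumes [measurable]: "\<phi> \<in> borel_measurable borel"
  shows "(\<integral>\<^sup>+s. ennreal (\<phi> (2 * \<bar>cos (pi * s)\<bar>)) * indicator {0..1} s \<partial>lborel) = Iw \<phi>"
proof -
  have "(\<integral>\<^sup>+s. ennreal (\<phi> (2 * \<bar>cos (pi * s)\<bar>)) * indicator {0..1} s \<partial>lborel) =
    (\<integral>\<^sup>+s. (\<lambda>a. ennreal (\<phi> (2 * sqrt a))) (cos (pi * s)^2) * indicator {0..1} s \<partial>lborel)"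
    by simp
  also have "\<dots> = Iw \<phi>" unfolding Iw_def by (subst arcsine_subst) auto
  finally show ?thesis .
qed

lemma sin_form:
  assumes [measurable]: "\<phi> \<in> borel_measurable borel"
  shows "(\<integral>\<^sup>+s. ennreal (\<phi> (2 * \<bar>sin (pi * s)\<bar>)) * indicator {0..1} s \<partial>lborel) = Iw \<phi>"
proof -
  have "(\<integral>\<^sup>+s. ennreal (\<phi> (2 * \<bar>sin (pi * s)\<bar>)) * indicator {0..1} s \<partial>lborel) =
    (\<integral>\<^sup>+s. (\<lambda>a. ennreal (\<phi> (2 * sqrt (1 - a)))) (cos (pi * s)^2) * indicator {0..1} s \<partial>lborel)"
    by (simp add: sin_squared_eq[symmetric])
  also have "\<dots> = (\<integral>\<^sup>+a. ennreal (\<phi> (2 * sqrt (1 - a))) * ennreal (wA a) * indicator {0..1} a \<partial>lborel)"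
    by (subst arcsine_subst) auto
  also have "\<dots> = ennreal \<bar>-1\<bar> * (\<integral>\<^sup>+a. ennreal (\<phi> (2 * sqrt (1 - (1 + (-1) * a)))) * ennreal (wA (1 + (-1) * a)) * indicator {0..1} (1 + (-1) * a) \<partial>lborel)"
    by (rule nn_integral_real_affine) auto
  also have "\<dots> = Iw \<phi>" unfolding Iw_def
  proof (simp, intro nn_integral_cong)
    fix a :: real
    show "ennreal (\<phi> (2 * sqrt a)) * ennreal (wA (1 - a)) * indicator {0..1} (1 - a) =
          ennreal (\<phi> (2 * sqrt a)) * ennreal (wA a) * indicator {0..1} a"
    proof -
      have "indicator {0..1} (1 - a) = (indicator {0..1} a :: ennreal)" by (auto simp: indicator_def)
      then show ?thesis by (simp add: wA_reflect)
    qed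
  qed
  finally show ?thesis .
qed

lemma Beta_nn_gen:
  assumes "a > 0" "b > 0"
  shows "(\<integral>\<^sup>+t. ennreal (t powr (a - 1) * (1 - t) powr (b - 1)) * indicator {0..1} t \<partial>lborel) = ennreal (Beta a b)"
  using nn_integral_has_integral_lebesgue'[OF _ has_integral_Beta_real[OF assms]] by auto

lemma ennreal_cmul: "0 \<le> c \<Longrightarrow> ennreal (c * y) * i = ennreal c * (ennreal y * i)"
  by (simp only: ennreal_mult' mult.assoc)

lemma wA_powr: "0 < a \<Longrightarrow> a < 1 \<Longrightarrow> wA a = 1 / pi * (a powr (1/2 - 1) * (1 - a) powr (1/2 - 1))"
proof -
  assume a: "0 < a" "a < 1"
  have "a powr (1/2 - 1) = 1 / sqrt a" using powr_mhalf[of a] a by simp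
  moreover have "(1 - a) powr (1/2 - 1) = 1 / sqrt (1 - a)" using powr_mhalf[of "1 - a"] a by simp
  ultimately show ?thesis unfolding wA_def by (simp add: real_sqrt_mult)
qed

lemma wA_mass: "(\<integral>\<^sup>+a. ennreal (wA a) * indicator {0..1} a \<partial>lborel) = 1"
proof -
  have "(\<integral>\<^sup>+a. ennreal (wA a) * indicator {0..1} a \<partial>lborel) =
        (\<integral>\<^sup>+a. ennreal (1 / pi) * (ennreal (a powr (1/2 - 1) * (1 - a) powr (1/2 - 1)) * indicator {0..1} a) \<partial>lborel)"
  proof (rule nn_integral_cong_AE)
    have "AE y in lborel. y \<notin> {0, 1}" by (intro AE_not_in countable_imp_null_set_lborel) auto
    then show "AE a in lborel. ennreal (wA a) * indicator {0..1} a =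
       ennreal (1 / pi) * (ennreal (a powr (1/2 - 1) * (1 - a) powr (1/2 - 1)) * indicator {0..1} a)"
    proof eventually_elim
      case (elim a)
      show ?case
      proof (cases "a \<in> {0..1}")
        case True
        then have "0 < a" "a < 1" using elim by auto
        then show ?thesis unfolding wA_powr[OF \<open>0 < a\<close> \<open>a < 1\<close>] by (intro ennreal_cmul) simp
      qed simp
    qed
  qed
  also have "\<dots> = ennreal (1 / pi) * (\<integral>\<^sup>+a. ennreal (a powr (1/2 - 1) * (1 - a) powr (1/2 - 1)) * indicator {0..1} a \<partial>lborel)"
    by (rule nn_integral_cmult) measurable
  also have "\<dots> = ennreal (1 / pi) * ennreal (Beta (1/2) (1/2))"
    by (subst Beta_nn_gen) auto
  also have "Beta (1/2) (1/2) = pi" by (simp add: Beta_altdef Gamma_one_half_real)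
  finally show ?thesis by (simp flip: ennreal_mult')
qed

lemma Iw_bounded:
  assumes [measurable]: "\<phi> \<in> borel_measurable borel" and b: "\<And>x. 0 \<le> x \<Longrightarrow> x \<le> 2 \<Longrightarrow> \<phi> x \<le> C"
  shows "Iw \<phi> \<le> ennreal C"
proof -
  have "Iw \<phi> \<le> (\<integral>\<^sup>+a. ennreal C * (ennreal (wA a) * indicator {0..1} a) \<partial>lborel)"
    unfolding Iw_def
  proof (intro nn_integral_mono)
    fix a :: real
    show "ennreal (\<phi> (2 * sqrt a)) * ennreal (wA a) * indicator {0..1} a \<le> ennreal C * (ennreal (wA a) * indicator {0..1} a)"
    proof (cases "a \<in> {0..1}")
      case True
      then have "2 * sqrt a \<le> 2" by simp
      then have "\<phi> (2 * sqrt a) \<le> C" using True by (intro b) auto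
      then show ?thesis using True by (auto intro!: mult_right_mono ennreal_leI simp: mult.assoc)
    qed simp
  qed
  also have "\<dots> = ennreal C" by (subst nn_integral_cmult) (auto simp: wA_mass)
  finally show ?thesis .
qed

lemma lm_bound: "0 < a \<Longrightarrow> lm (2 * sqrt a) \<le> 2 * a powr (-1/4)"
proof -
  assume a: "0 < a"
  show ?thesis
  proof (cases "2 * sqrt a \<ge> 1")
    case True
    then show ?thesis by (simp add: lm_def)
  next
    case False
    then have "lm (2 * sqrt a) = - ln (2 * sqrt a)" by (simp add: lm_def)
    also have "\<dots> \<le> - ln (sqrt a)" using a by simp
    also have "\<dots> = - ln a / 2" using a by (simp add: ln_sqrt)
    also have "- ln a / 2 \<le> 2 * a powr (-1/4)"
    proof -
      have "ln (a powr (-1/4)) \<le> a powr (-1/4) - 1" using a by (intro ln_le_minus_one) simp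
      moreover have "ln (a powr (-1/4)) = - ln a / 4" using a by (simp add: ln_powr)
      ultimately show ?thesis by simp
    qed
    finally show ?thesis .
  qed
qed

lemma Iw_lm_finite: "Iw lm < \<infinity>"
proof -
  have "Iw lm \<le> (\<integral>\<^sup>+a. ennreal (2 / pi) * (ennreal (a powr (1/4 - 1) * (1 - a) powr (1/2 - 1)) * indicator {0..1} a) \<partial>lborel)"
    unfolding Iw_def
  proof (rule nn_integral_mono_AE)
    have "AE y in lborel. y \<notin> {0, 1}" by (intro AE_not_in countable_imp_null_set_lborel) auto
    then show "AE a in lborel. ennreal (lm (2 * sqrt a)) * ennreal (wA a) * indicator {0..1} a \<le>
      ennreal (2 / pi) * (ennreal (a powr (1/4 - 1) * (1 - a) powr (1/2 - 1)) * indicator {0..1} a)"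
    proof eventually_elim
      case (elim a)
      show ?case
      proof (cases "a \<in> {0..1}")
        case True
        then have a: "0 < a" "a < 1" using elim by auto
        have l0: "0 \<le> lm (2 * sqrt a)" using a by (intro lm_nonneg) auto
        have w: "wA a = 1 / pi * (a powr (1/2 - 1) * (1 - a) powr (1/2 - 1))" using a by (rule wA_powr)
        have w0: "0 \<le> wA a" using a by (intro wA_nonneg) auto
        have "lm (2 * sqrt a) * wA a \<le> (2 * a powr (-1/4)) * wA a"
          using lm_bound[OF a(1)] w0 by (intro mult_right_mono) auto
        also have "\<dots> = 2 / pi * ((a powr (-1/4) * a powr (1/2 - 1)) * (1 - a) powr (1/2 - 1))"
          unfolding w by simp
        also have "a powr (-1/4) * a powr (1/2 - 1) = a powr (1/4 - 1)"
          using a by (simp flip: powr_add)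
        finally have "lm (2 * sqrt a) * wA a \<le> 2 / pi * (a powr (1/4 - 1) * (1 - a) powr (1/2 - 1))" .
        then have le: "ennreal (lm (2 * sqrt a) * wA a) \<le> ennreal (2 / pi * (a powr (1/4 - 1) * (1 - a) powr (1/2 - 1)))"
          by (rule ennreal_leI)
        have e1: "ennreal (lm (2 * sqrt a)) * ennreal (wA a) * indicator {0..1} a = ennreal (lm (2 * sqrt a) * wA a)"
          using True l0 by (simp only: ennreal_mult' indicator_simps mult_1_right)
        have e2: "ennreal (2 / pi) * (ennreal (a powr (1/4 - 1) * (1 - a) powr (1/2 - 1)) * indicator {0..1} a)
           = ennreal (2 / pi * (a powr (1/4 - 1) * (1 - a) powr (1/2 - 1)))"
          using True by (subst ennreal_mult') auto
        show ?thesis unfolding e1 e2 by (rule le)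
      qed simp
    qed
  qed
  also have "\<dots> = ennreal (2 / pi) * (\<integral>\<^sup>+a. ennreal (a powr (1/4 - 1) * (1 - a) powr (1/2 - 1)) * indicator {0..1} a \<partial>lborel)"
    by (rule nn_integral_cmult) measurable
  also have "\<dots> = ennreal (2 / pi) * ennreal (Beta (1/4) (1/2))"
    by (subst Beta_nn_gen) auto
  also have "\<dots> < \<infinity>" by (simp flip: ennreal_mult')
  finally show ?thesis .
qed

lemma half_affine:
  assumes [measurable]: "\<phi> \<in> borel_measurable borel"
  shows "(\<integral>\<^sup>+s. ennreal (\<phi> (2 * \<bar>sin (pi * (t + 1/2 * s))\<bar>)) * indicator {0..1} s \<partial>lborel) =
         2 * (\<integral>\<^sup>+u. ennreal (\<phi> (2 * \<bar>sin (pi * u)\<bar>)) * indicator {t..t + 1/2} u \<partial>lborel)"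
proof -
  have "(\<integral>\<^sup>+u. ennreal (\<phi> (2 * \<bar>sin (pi * u)\<bar>)) * indicator {t..t + 1/2} u \<partial>lborel) =
     ennreal \<bar>1/2\<bar> * (\<integral>\<^sup>+s. ennreal (\<phi> (2 * \<bar>sin (pi * (t + 1/2 * s))\<bar>)) * indicator {t..t + 1/2} (t + 1/2 * s) \<partial>lborel)"
    by (rule nn_integral_real_affine) auto
  also have "(\<lambda>s. indicator {t..t + 1/2} (t + 1/2 * s)) = (indicator {0..1} :: real \<Rightarrow> ennreal)"
    by (auto simp: indicator_def fun_eq_iff)
  finally have "(\<integral>\<^sup>+u. ennreal (\<phi> (2 * \<bar>sin (pi * u)\<bar>)) * indicator {t..t + 1/2} u \<partial>lborel) =
     ennreal (1/2) * (\<integral>\<^sup>+s. ennreal (\<phi> (2 * \<bar>sin (pi * (t + 1/2 * s))\<bar>)) * indicator {0..1} s \<partial>lborel)"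
    by simp
  then have "2 * (\<integral>\<^sup>+u. ennreal (\<phi> (2 * \<bar>sin (pi * u)\<bar>)) * indicator {t..t + 1/2} u \<partial>lborel) =
     (2 * ennreal (1/2)) * (\<integral>\<^sup>+s. ennreal (\<phi> (2 * \<bar>sin (pi * (t + 1/2 * s))\<bar>)) * indicator {0..1} s \<partial>lborel)"
    by (simp add: mult.assoc)
  also have "2 * ennreal (1/2) = 1" using two_ennreal_half[of 1] by simp
  finally show ?thesis by simp
qed

lemma doubling:
  assumes [measurable]: "\<phi> \<in> borel_measurable borel"
  shows "(\<integral>\<^sup>+s. (ennreal (\<phi> (2 * \<bar>sin (pi * (0 + 1/2 * s))\<bar>)) + ennreal (\<phi> (2 * \<bar>sin (pi * (1/2 + 1/2 * s))\<bar>))) * indicator {0..1} s \<partial>lborel)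
         = 2 * Iw \<phi>"
proof -
  have "(\<integral>\<^sup>+s. (ennreal (\<phi> (2 * \<bar>sin (pi * (0 + 1/2 * s))\<bar>)) + ennreal (\<phi> (2 * \<bar>sin (pi * (1/2 + 1/2 * s))\<bar>))) * indicator {0..1} s \<partial>lborel)
    = (\<integral>\<^sup>+s. ennreal (\<phi> (2 * \<bar>sin (pi * (0 + 1/2 * s))\<bar>)) * indicator {0..1} s + ennreal (\<phi> (2 * \<bar>sin (pi * (1/2 + 1/2 * s))\<bar>)) * indicator {0..1} s \<partial>lborel)"
    by (simp add: distrib_right)
  also have "\<dots> = (\<integral>\<^sup>+s. ennreal (\<phi> (2 * \<bar>sin (pi * (0 + 1/2 * s))\<bar>)) * indicator {0..1} s \<partial>lborel) +
       (\<integral>\<^sup>+s. ennreal (\<phi> (2 * \<bar>sin (pi * (1/2 + 1/2 * s))\<bar>)) * indicator {0..1} s \<partial>lborel)"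
    by (rule nn_integral_add) auto
  also have "\<dots> = 2 * (\<integral>\<^sup>+u. ennreal (\<phi> (2 * \<bar>sin (pi * u)\<bar>)) * indicator {0..0 + 1/2} u \<partial>lborel) +
                  2 * (\<integral>\<^sup>+u. ennreal (\<phi> (2 * \<bar>sin (pi * u)\<bar>)) * indicator {1/2..1/2 + 1/2} u \<partial>lborel)"
    by (simp only: half_affine[OF assms])
  also have "\<dots> = 2 * ((\<integral>\<^sup>+u. ennreal (\<phi> (2 * \<bar>sin (pi * u)\<bar>)) * indicator {0..1/2} u \<partial>lborel) +
                  (\<integral>\<^sup>+u. ennreal (\<phi> (2 * \<bar>sin (pi * u)\<bar>)) * indicator {1/2..1} u \<partial>lborel))"
    by (simp add: distrib_left)
  also have "(\<integral>\<^sup>+u. ennreal (\<phi> (2 * \<bar>sin (pi * u)\<bar>)) * indicator {0..1/2} u \<partial>lborel) +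
                  (\<integral>\<^sup>+u. ennreal (\<phi> (2 * \<bar>sin (pi * u)\<bar>)) * indicator {1/2..1} u \<partial>lborel) =
     (\<integral>\<^sup>+u. ennreal (\<phi> (2 * \<bar>sin (pi * u)\<bar>)) * indicator {0..1/2} u + ennreal (\<phi> (2 * \<bar>sin (pi * u)\<bar>)) * indicator {1/2..1} u \<partial>lborel)"
    by (rule nn_integral_add[symmetric]) auto
  also have "\<dots> = (\<integral>\<^sup>+u. ennreal (\<phi> (2 * \<bar>sin (pi * u)\<bar>)) * indicator {0..1} u \<partial>lborel)"
  proof (rule nn_integral_cong_AE)
    have "AE s in lborel. s \<noteq> 1/2" by (rule AE_lborel_singleton)
    then show "AE u in lborel. ennreal (\<phi> (2 * \<bar>sin (pi * u)\<bar>)) * indicator {0..1/2} u + ennreal (\<phi> (2 * \<bar>sin (pi * u)\<bar>)) * indicator {1/2..1} u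
       = ennreal (\<phi> (2 * \<bar>sin (pi * u)\<bar>)) * indicator {0..1} u"
      by eventually_elim (auto simp: indicator_def)
  qed
  also have "\<dots> = Iw \<phi>" by (rule sin_form) fact
  finally show ?thesis .
qed

lemma sin_split:
  assumes s: "0 < s" "s < 1"
  shows "2 * \<bar>sin (pi * s)\<bar> = (2 * \<bar>sin (pi * (0 + 1/2 * s))\<bar>) * (2 * \<bar>sin (pi * (1/2 + 1/2 * s))\<bar>)"
    and "2 * \<bar>sin (pi * (0 + 1/2 * s))\<bar> > 0" and "2 * \<bar>sin (pi * (1/2 + 1/2 * s))\<bar> > 0"
proof -
  have e1: "sin (pi * (1/2 + 1/2 * s)) = cos (pi * s / 2)" by (simp add: algebra_simps sin_add)
  have e0: "pi * (0 + 1/2 * s) = pi * s / 2" by simp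
  have "sin (pi * s) = 2 * sin (pi * s / 2) * cos (pi * s / 2)"
    using sin_double[of "pi * s / 2"] by simp
  then show "2 * \<bar>sin (pi * s)\<bar> = (2 * \<bar>sin (pi * (0 + 1/2 * s))\<bar>) * (2 * \<bar>sin (pi * (1/2 + 1/2 * s))\<bar>)"
    unfolding e1 e0 by (simp add: abs_mult)
  have "sin (pi * s / 2) > 0" using s by (intro sin_gt_zero) auto
  then show "2 * \<bar>sin (pi * (0 + 1/2 * s))\<bar> > 0" unfolding e0 by simp
  have "cos (pi * s / 2) > 0" using s by (intro cos_gt_zero) auto
  then show "2 * \<bar>sin (pi * (1/2 + 1/2 * s))\<bar> > 0" unfolding e1 by simp
qed

lemma Iw_lp_finite: "Iw lp < \<infinity>"
proof -
  have "Iw lp \<le> ennreal (ln 2)"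
    by (rule Iw_bounded) (auto simp: lp_def)
  then show ?thesis using order.strict_trans1 by fastforce
qed

lemma Iw_eq: "Iw lp = Iw lm"
proof -
  define S where "S s = 2 * \<bar>sin (pi * s)\<bar>" for s :: real
  define S1 where "S1 s = 2 * \<bar>sin (pi * (0 + 1/2 * s))\<bar>" for s :: real
  define S2 where "S2 s = 2 * \<bar>sin (pi * (1/2 + 1/2 * s))\<bar>" for s :: real
  have key: "(ennreal (lp (S s)) + (ennreal (lm (S1 s)) + ennreal (lm (S2 s)))) * indicator {0..1} s =
             (ennreal (lm (S s)) + (ennreal (lp (S1 s)) + ennreal (lp (S2 s)))) * indicator {0..1} s"
    if "s \<noteq> 0" "s \<noteq> 1" for s
  proof (cases "s \<in> {0..1}")
    case True
    then have s: "0 < s" "s < 1" using that by auto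
    note sp = sin_split[OF s, folded S_def S1_def S2_def]
    have x: "S1 s > 0" "S2 s > 0" using sp by auto
    have "ln (S s) = ln (S1 s) + ln (S2 s)" using sp x by (simp add: ln_mult)
    then have r: "lp (S s) + (lm (S1 s) + lm (S2 s)) = lm (S s) + (lp (S1 s) + lp (S2 s))"
      using x sp by (simp add: lp_lm)
    have nn: "0 \<le> lm (S1 s)" "0 \<le> lm (S2 s)" "0 \<le> lm (S s)" using x sp by (auto intro: lm_nonneg)
    have "ennreal (lp (S s)) + (ennreal (lm (S1 s)) + ennreal (lm (S2 s))) = ennreal (lp (S s) + (lm (S1 s) + lm (S2 s)))"
      using nn lp_nonneg by (simp add: ennreal_plus)
    also have "\<dots> = ennreal (lm (S s) + (lp (S1 s) + lp (S2 s)))" by (simp only: r)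
    also have "\<dots> = ennreal (lm (S s)) + (ennreal (lp (S1 s)) + ennreal (lp (S2 s)))"
      using nn lp_nonneg by (simp add: ennreal_plus)
    finally show ?thesis by simp
  qed simp
  have L: "(\<integral>\<^sup>+s. (ennreal (lp (S s)) + (ennreal (lm (S1 s)) + ennreal (lm (S2 s)))) * indicator {0..1} s \<partial>lborel)
      = Iw lp + 2 * Iw lm" if [measurable]: "lp \<in> borel_measurable borel" "lm \<in> borel_measurable borel" for lp lm
  proof -
    have "(\<integral>\<^sup>+s. (ennreal (lp (S s)) + (ennreal (lm (S1 s)) + ennreal (lm (S2 s)))) * indicator {0..1} s \<partial>lborel)
       = (\<integral>\<^sup>+s. ennreal (lp (S s)) * indicator {0..1} s + (ennreal (lm (S1 s)) + ennreal (lm (S2 s))) * indicator {0..1} s \<partial>lborel)"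
      by (simp add: distrib_right)
    also have "\<dots> = (\<integral>\<^sup>+s. ennreal (lp (S s)) * indicator {0..1} s \<partial>lborel) +
        (\<integral>\<^sup>+s. (ennreal (lm (S1 s)) + ennreal (lm (S2 s))) * indicator {0..1} s \<partial>lborel)"
      by (rule nn_integral_add) (auto simp: S_def S1_def S2_def)
    also have "\<dots> = Iw lp + 2 * Iw lm"
      unfolding S_def S1_def S2_def by (simp only: sin_form doubling that)
    finally show ?thesis .
  qed
  have "Iw lp + 2 * Iw lm = Iw lm + 2 * Iw lp"
  proof -
    have "Iw lp + 2 * Iw lm = (\<integral>\<^sup>+s. (ennreal (lp (S s)) + (ennreal (lm (S1 s)) + ennreal (lm (S2 s)))) * indicator {0..1} s \<partial>lborel)"
      by (rule L[symmetric]) auto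
    also have "\<dots> = (\<integral>\<^sup>+s. (ennreal (lm (S s)) + (ennreal (lp (S1 s)) + ennreal (lp (S2 s)))) * indicator {0..1} s \<partial>lborel)"
    proof (rule nn_integral_cong_AE)
      have "AE y in lborel. y \<notin> {0, 1}" by (intro AE_not_in countable_imp_null_set_lborel) auto
      then show "AE s in lborel. (ennreal (lp (S s)) + (ennreal (lm (S1 s)) + ennreal (lm (S2 s)))) * indicator {0..1} s =
             (ennreal (lm (S s)) + (ennreal (lp (S1 s)) + ennreal (lp (S2 s)))) * indicator {0..1} s"
        by eventually_elim (rule key, auto)
    qed
    also have "\<dots> = Iw lm + 2 * Iw lp" by (rule L) auto
    finally show ?thesis .
  qed
  moreover obtain p where p: "Iw lp = ennreal p" "p \<ge> 0" using Iw_lp_finite by (cases "Iw lp") auto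
  moreover obtain m where m: "Iw lm = ennreal m" "m \<ge> 0" using Iw_lm_finite by (cases "Iw lm") auto
  ultimately have "ennreal (p + 2 * m) = ennreal (m + 2 * p)"
    by (simp add: ennreal_plus ennreal_mult')
  then have "p + 2 * m = m + 2 * p" using p m by (subst (asm) ennreal_inj) auto
  then show ?thesis using p m by simp
qed

definition J :: "(real \<Rightarrow> real \<Rightarrow> ennreal) \<Rightarrow> ennreal" where
  "J F = (\<integral>\<^sup>+a. (\<integral>\<^sup>+b. F a b * ennreal (wA b) * indicator {0..1} b \<partial>lborel) * ennreal (wA a) * indicator {0..1} a \<partial>lborel)"

lemma J_add:
  assumes [measurable]: "(\<lambda>x. F (fst x) (snd x)) \<in> borel_measurable (lborel \<Otimes>\<^sub>M lborel)"
     "(\<lambda>x. G (fst x) (snd x)) \<in> borel_measurable (lborel \<Otimes>\<^sub>M lborel)"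
  shows "J (\<lambda>a b. F a b + G a b) = J F + J G"
proof -
  have mF[measurable]: "case_prod F \<in> borel_measurable (lborel \<Otimes>\<^sub>M lborel)"
    using assms(1) by (simp add: case_prod_beta')
  have mG[measurable]: "case_prod G \<in> borel_measurable (lborel \<Otimes>\<^sub>M lborel)"
    using assms(2) by (simp add: case_prod_beta')
  have inner: "(\<integral>\<^sup>+b. (F a b + G a b) * ennreal (wA b) * indicator {0..1} b \<partial>lborel) =
      (\<integral>\<^sup>+b. F a b * ennreal (wA b) * indicator {0..1} b \<partial>lborel) + (\<integral>\<^sup>+b. G a b * ennreal (wA b) * indicator {0..1} b \<partial>lborel)" for a
    by (simp add: distrib_right nn_integral_add)
  show ?thesis unfolding J_def inner
    by (simp add: distrib_right nn_integral_add)
qed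

lemma J_fst:
  assumes [measurable]: "\<phi> \<in> borel_measurable borel"
  shows "J (\<lambda>a b. ennreal (\<phi> (2 * sqrt a))) = Iw \<phi>"
proof -
  have "(\<integral>\<^sup>+b. ennreal (\<phi> (2 * sqrt a)) * ennreal (wA b) * indicator {0..1} b \<partial>lborel) = ennreal (\<phi> (2 * sqrt a))" for a
    using nn_integral_cmult[of "\<lambda>b. ennreal (wA b) * indicator {0..1} b" lborel "ennreal (\<phi> (2 * sqrt a))"]
    by (simp add: wA_mass mult.assoc)
  then show ?thesis unfolding J_def Iw_def by simp
qed

lemma J_snd:
  assumes [measurable]: "\<phi> \<in> borel_measurable borel"
  shows "J (\<lambda>a b. ennreal (\<phi> (2 * sqrt b))) = Iw \<phi>"
proof -
  have "J (\<lambda>a b. ennreal (\<phi> (2 * sqrt b))) = (\<integral>\<^sup>+a. Iw \<phi> * (ennreal (wA a) * indicator {0..1} a) \<partial>lborel)"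
    unfolding J_def Iw_def by (simp add: mult.assoc)
  also have "\<dots> = Iw \<phi>" by (subst nn_integral_cmult) (auto simp: wA_mass)
  finally show ?thesis .
qed

lemma Psi_lm: "Psi g = lm (4 * sqrt g)" unfolding Psi_def lm_def ..

lemma J_lp_Psi:
  "J (\<lambda>a b. ennreal (lp (4 * sqrt (a * b)))) = J (\<lambda>a b. ennreal (Psi (a * b)))"
proof -
  have key: "J (\<lambda>a b. ennreal (lp (4 * sqrt (a * b))) + (ennreal (lm (2 * sqrt a)) + ennreal (lm (2 * sqrt b)))) =
             J (\<lambda>a b. ennreal (Psi (a * b)) + (ennreal (lp (2 * sqrt a)) + ennreal (lp (2 * sqrt b))))"
    unfolding J_def
  proof (intro nn_integral_cong_AE)
    have "AE y in lborel. y \<noteq> 0" by (rule AE_lborel_singleton)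
    then show "AE a in lborel.
       (\<integral>\<^sup>+b. (ennreal (lp (4 * sqrt (a * b))) + (ennreal (lm (2 * sqrt a)) + ennreal (lm (2 * sqrt b)))) * ennreal (wA b) * indicator {0..1} b \<partial>lborel) * ennreal (wA a) * indicator {0..1} a =
       (\<integral>\<^sup>+b. (ennreal (Psi (a * b)) + (ennreal (lp (2 * sqrt a)) + ennreal (lp (2 * sqrt b)))) * ennreal (wA b) * indicator {0..1} b \<partial>lborel) * ennreal (wA a) * indicator {0..1} a"
    proof eventually_elim
      case (elim a)
      show ?case
      proof (cases "a \<in> {0..1}")
        case True
        then have a: "0 < a" using elim by auto
        have "(\<integral>\<^sup>+b. (ennreal (lp (4 * sqrt (a * b))) + (ennreal (lm (2 * sqrt a)) + ennreal (lm (2 * sqrt b)))) * ennreal (wA b) * indicator {0..1} b \<partial>lborel) =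
              (\<integral>\<^sup>+b. (ennreal (Psi (a * b)) + (ennreal (lp (2 * sqrt a)) + ennreal (lp (2 * sqrt b)))) * ennreal (wA b) * indicator {0..1} b \<partial>lborel)"
        proof (rule nn_integral_cong_AE)
          have "AE y in lborel. y \<noteq> 0" by (rule AE_lborel_singleton)
          then show "AE b in lborel. (ennreal (lp (4 * sqrt (a * b))) + (ennreal (lm (2 * sqrt a)) + ennreal (lm (2 * sqrt b)))) * ennreal (wA b) * indicator {0..1} b =
              (ennreal (Psi (a * b)) + (ennreal (lp (2 * sqrt a)) + ennreal (lp (2 * sqrt b)))) * ennreal (wA b) * indicator {0..1} b"
          proof eventually_elim
            case (elim b)
            show ?case
            proof (cases "b \<in> {0..1}")
              case True
              then have b: "0 < b" using elim by auto
              define x where "x = 2 * sqrt a"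
              define y where "y = 2 * sqrt b"
              have x: "x > 0" "y > 0" using a b by (auto simp: x_def y_def)
              have xy: "4 * sqrt (a * b) = x * y" by (simp add: x_def y_def real_sqrt_mult)
              have "ln (x * y) = ln x + ln y" using x by (simp add: ln_mult)
              then have r: "lp (x * y) + (lm x + lm y) = lm (x * y) + (lp x + lp y)"
                using x by (simp add: lp_lm)
              have nn: "0 \<le> lm x" "0 \<le> lm y" "0 \<le> lm (x * y)" using x by (auto intro: lm_nonneg)
              have "ennreal (lp (x * y)) + (ennreal (lm x) + ennreal (lm y)) = ennreal (lp (x * y) + (lm x + lm y))"
                using nn lp_nonneg by (simp add: ennreal_plus)
              also have "\<dots> = ennreal (lm (x * y) + (lp x + lp y))" by (simp only: r)
              also have "\<dots> = ennreal (lm (x * y)) + (ennreal (lp x) + ennreal (lp y))"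
                using nn lp_nonneg by (simp add: ennreal_plus)
              finally show ?thesis unfolding Psi_lm xy x_def[symmetric] y_def[symmetric] by simp
            qed simp
          qed
        qed
        then show ?thesis by simp
      qed simp
    qed
  qed
  have "J (\<lambda>a b. ennreal (lp (4 * sqrt (a * b)))) + (Iw lm + Iw lm) = J (\<lambda>a b. ennreal (Psi (a * b))) + (Iw lp + Iw lp)"
    using key by (simp add: J_add J_fst J_snd)
  then show ?thesis unfolding Iw_eq using Iw_lm_finite
    by (simp add: ennreal_add_left_cancel[symmetric] add.commute[of "J _"] ennreal_add_eq_top) auto
qed

lemma cis_plus_nz: "cmod w \<noteq> 1 \<Longrightarrow> cis x + w \<noteq> 0"
proof
  assume "cmod w \<noteq> 1" "cis x + w = 0"
  then have "w = - cis x" by (simp add: add_eq_0_iff)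
  then have "cmod w = 1" by simp
  with \<open>cmod w \<noteq> 1\<close> show False by simp
qed

lemma inner_jensen:
  fixes w :: complex
  assumes w1: "cmod w \<noteq> 1" and w4: "cmod w \<le> 4"
  defines "g \<equiv> (\<lambda>x::real. ln (cmod (cis (2*pi*x) + w)))"
  shows "integrable lborel (\<lambda>x. indicator {0..1} x * g x)"
    and "(\<integral>x. indicator {0..1} x * g x \<partial>lborel) = ln (max 1 (cmod w))"
    and "(\<integral>\<^sup>+x. ennreal (norm (indicator {0..1} x * g x)) \<partial>lborel) \<le> ennreal (2 * ln 5)"
proof -
  have cont: "continuous_on {0..1} g" unfolding g_def
    using cis_plus_nz[OF w1] by (intro continuous_intros) auto
  have si: "set_integrable lborel {0..1} g"
    unfolding set_integrable_def by (rule borel_integrable_compact[OF _ cont]) auto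
  then show int: "integrable lborel (\<lambda>x. indicator {0..1} x * g x)"
    unfolding set_integrable_def by simp
  have "(LINT x:{0..1}|lborel. g x) = integral {0..1} g"
    by (rule set_borel_integral_eq_integral(2)[OF si])
  also have "\<dots> = ln (max 1 (cmod w))" unfolding g_def
    by (rule integral_unique[OF jensen_has_integral[OF w1]])
  finally show I: "(\<integral>x. indicator {0..1} x * g x \<partial>lborel) = ln (max 1 (cmod w))"
    unfolding set_lebesgue_integral_def by simp
  have gle: "g x \<le> ln 5" for x
  proof -
    have pos: "cmod (cis (2*pi*x) + w) > 0" using cis_plus_nz[OF w1] by simp
    have "cmod (cis (2*pi*x) + w) \<le> cmod (cis (2*pi*x)) + cmod w" by (rule norm_triangle_ineq)
    also have "\<dots> \<le> 5" using w4 by simp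
    finally show ?thesis unfolding g_def using pos by simp
  qed
  have intmax: "integrable lborel (\<lambda>x. max 0 (indicator {0..1} x * g x))"
    using int by (intro integrable_max) auto
  have intc: "integrable lborel (\<lambda>x::real. indicator {0..1} x * ln (5::real))"
  proof -
    have "integrable lborel (indicat_real {0..1::real})" by (simp add: integrable_indicator_iff)
    then show ?thesis by (rule integrable_mult_left)
  qed
  have c1: "(\<integral>x. indicator {0..1::real} x * ln (5::real) \<partial>lborel) = ln 5"
    by (simp only: integral_mult_left_zero integral_indicator) (simp add: measure_def)
  have e1: "(\<integral>x. norm (indicator {0..1} x * g x) \<partial>lborel) =
        (\<integral>x. 2 * max 0 (indicator {0..1} x * g x) - indicator {0..1} x * g x \<partial>lborel)"
    by (intro Bochner_Integration.integral_cong) (auto simp: max_def)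
  have e2: "(\<integral>x. 2 * max 0 (indicator {0..1} x * g x) - indicator {0..1} x * g x \<partial>lborel) = 2 * (\<integral>x. max 0 (indicator {0..1} x * g x) \<partial>lborel) - (\<integral>x. indicator {0..1} x * g x \<partial>lborel)"
    using intmax int by simp
  have m: "(\<integral>x. max 0 (indicator {0..1} x * g x) \<partial>lborel) \<le> (\<integral>x. indicator {0..1::real} x * ln (5::real) \<partial>lborel)"
    using intmax intc gle by (intro integral_mono) (auto simp: indicator_def)
  have i0: "(\<integral>x. indicator {0..1} x * g x \<partial>lborel) \<ge> 0" unfolding I by simp
  have le: "(\<integral>x. norm (indicator {0..1} x * g x) \<partial>lborel) \<le> 2 * ln 5"
    using e1 e2 m i0 c1 by linarith
  have "(\<integral>\<^sup>+x. ennreal (norm (indicator {0..1} x * g x)) \<partial>lborel) = ennreal (\<integral>x. norm (indicator {0..1} x * g x) \<partial>lborel)"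
    using int by (intro nn_integral_eq_integral) auto
  also have "\<dots> \<le> ennreal (2 * ln 5)" using le by (rule ennreal_leI)
  finally show "(\<integral>\<^sup>+x. ennreal (norm (indicator {0..1} x * g x)) \<partial>lborel) \<le> ennreal (2 * ln 5)" .
qed

definition aa :: "real \<Rightarrow> real" where "aa t = cmod (1 + cis (2*pi*t))"

lemma aa_cos: "aa t = 2 * \<bar>cos (pi * t)\<bar>"
proof -
  have e: "2*pi*t = 2*(pi*t)" by simp
  have "1 + cis (2*(pi*t)) = cis (pi*t) * complex_of_real (2 * cos (pi*t))"
  proof (rule complex_eqI)
    show "Re (1 + cis (2*(pi*t))) = Re (cis (pi*t) * complex_of_real (2 * cos (pi*t)))"
      by (simp add: cos_double_cos power2_eq_square)
    show "Im (1 + cis (2*(pi*t))) = Im (cis (pi*t) * complex_of_real (2 * cos (pi*t)))"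
      by (simp add: sin_double)
  qed
  then have "1 + cis (2*pi*t) = cis (pi*t) * complex_of_real (2 * cos (pi*t))" by (simp only: e)
  then show ?thesis unfolding aa_def by (simp add: norm_mult)
qed

lemma aa_le2: "aa t \<le> 2" unfolding aa_cos by simp

lemma aa_measurable[measurable]: "aa \<in> borel_measurable borel"
  unfolding aa_cos by measurable

lemma finite_subsingleton: "(\<And>x y. x \<in> S \<Longrightarrow> y \<in> S \<Longrightarrow> x = y) \<Longrightarrow> finite S"
proof (cases "S = {}")
  case False
  assume h: "\<And>x y. x \<in> S \<Longrightarrow> y \<in> S \<Longrightarrow> x = y"
  from False obtain x where "x \<in> S" by auto
  then have "S \<subseteq> {x}" using h by auto
  then show ?thesis by (rule finite_subset) simp
qed simp

lemma finite_cos_level: "finite {t\<in>{0..1::real}. cos (pi * t) = c}"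
proof (rule finite_subsingleton)
  fix x y assume "x \<in> {t\<in>{0..1::real}. cos (pi * t) = c}" "y \<in> {t\<in>{0..1::real}. cos (pi * t) = c}"
  then have x: "0 \<le> x" "x \<le> 1" "cos (pi * x) = c" and y: "0 \<le> y" "y \<le> 1" "cos (pi * y) = c" by auto
  have "pi * x = pi * y"
  proof (rule cos_inj_pi)
    show "0 \<le> pi * x" "0 \<le> pi * y" using x y by auto
    show "pi * x \<le> pi" "pi * y \<le> pi" using x y by auto
    show "cos (pi * x) = cos (pi * y)" using x y by simp
  qed
  then show "x = y" by simp
qed

lemma finite_aa_level: "finite {t\<in>{0..1::real}. aa t = c}"
proof -
  have "{t\<in>{0..1::real}. aa t = c} \<subseteq> {t\<in>{0..1::real}. cos (pi * t) = c/2} \<union> {t\<in>{0..1::real}. cos (pi * t) = -(c/2)}"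
  proof
    fix t assume "t \<in> {t\<in>{0..1::real}. aa t = c}"
    then have t: "t \<in> {0..1}" "2 * \<bar>cos (pi*t)\<bar> = c" by (auto simp: aa_cos)
    then have "cos (pi*t) = c/2 \<or> cos (pi*t) = -(c/2)" by (cases "cos (pi*t) \<ge> 0") auto
    then show "t \<in> {t\<in>{0..1::real}. cos (pi * t) = c/2} \<union> {t\<in>{0..1::real}. cos (pi * t) = -(c/2)}"
      using t(1) by blast
  qed
  then show ?thesis by (rule finite_subset) (intro finite_UnI finite_cos_level)
qed

lemma AE_aa_ne1:
  "AE y in (lborel :: (real \<times> real) measure). y \<in> {0..1} \<times> {0..1} \<longrightarrow> aa (fst y) * aa (snd y) \<noteq> 1"
proof -
  have "AE y in (lborel \<Otimes>\<^sub>M lborel :: (real \<times> real) measure). y \<in> {0..1} \<times> {0..1} \<longrightarrow> aa (fst y) * aa (snd y) \<noteq> 1"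
  proof (rule lborel_pair.AE_pair_measure)
    show "{x \<in> space (lborel \<Otimes>\<^sub>M lborel). x \<in> {0..1} \<times> {0..1} \<longrightarrow> aa (fst x) * aa (snd x) \<noteq> 1} \<in> sets (lborel \<Otimes>\<^sub>M lborel)"
      by measurable
    show "AE x in lborel. AE y in lborel. (x, y) \<in> {0..1} \<times> {0..1} \<longrightarrow> aa (fst (x, y)) * aa (snd (x, y)) \<noteq> 1"
    proof (rule AE_I2)
      fix x :: real
      show "AE y in lborel. (x, y) \<in> {0..1} \<times> {0..1} \<longrightarrow> aa (fst (x, y)) * aa (snd (x, y)) \<noteq> 1"
      proof (cases "aa x = 0")
        case True then show ?thesis by simp
      next
        case False
        have "AE y in lborel. y \<notin> {t\<in>{0..1::real}. aa t = 1 / aa x}"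
          by (intro AE_not_in countable_imp_null_set_lborel countable_finite finite_aa_level)
        then show ?thesis
          by eventually_elim (use False in \<open>auto simp: field_simps\<close>)
      qed
    qed
  qed
  then show ?thesis unfolding lborel_prod .
qed

lemma cis_measurable[measurable]: "cis \<in> borel_measurable borel"
  by (intro borel_measurable_continuous_onI continuous_intros)

lemma aa_eq_cmod: "cmod ((1 + cis (2*pi*a)) * (1 + cis (2*pi*b))) = aa a * aa b"
  unfolding aa_def by (simp add: norm_mult)

lemma LHS_eq:
  "mahler_measure3 (\<lambda>x1 x2 x3. 1 + x1 + x2 + x3 + x2 * x3) =
   enn2real (\<integral>\<^sup>+s. (\<integral>\<^sup>+t. ennreal (lp (aa s * aa t)) * indicator {0..1} t \<partial>lborel) * indicator {0..1} s \<partial>lborel)"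
proof -
  define W where "W y = (1 + cis (2*pi* fst y)) * (1 + cis (2*pi* snd y))" for y :: "real \<times> real"
  define L where "L x y = ln (cmod (cis (2*pi*x) + W y))" for x :: real and y :: "real \<times> real"
  define B2 where "B2 = {0..1::real} \<times> {0..1::real}"
  define f where "f x y = indicator {0..1} x * (indicator B2 y * L x y)" for x :: real and y :: "real \<times> real"
  have [measurable]: "W \<in> borel_measurable borel" unfolding W_def
    by (intro borel_measurable_continuous_onI continuous_intros)
  have [measurable]: "B2 \<in> sets borel" unfolding B2_def
    by (intro borel_closed closed_Times closed_atLeastAtMost)
  have [measurable]: "B2 \<in> sets (borel \<Otimes>\<^sub>M borel)"
    unfolding B2_def by (intro pair_measureI) auto
  have mf[measurable]: "(\<lambda>z. f (fst z) (snd z)) \<in> borel_measurable (lborel \<Otimes>\<^sub>M lborel)"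
    unfolding f_def L_def by measurable
  have cmW: "cmod (W y) = aa (fst y) * aa (snd y)" for y unfolding W_def aa_eq_cmod ..
  have W4: "cmod (W y) \<le> 4" for y
  proof -
    have "aa (fst y) * aa (snd y) \<le> 2 * 2" by (intro mult_mono aa_le2) (auto simp: aa_def)
    then show ?thesis unfolding cmW by simp
  qed
  have AEW: "AE y in lborel. y \<in> B2 \<longrightarrow> cmod (W y) \<noteq> 1"
    using AE_aa_ne1 unfolding B2_def cmW .
  have step1: "mahler_measure3 (\<lambda>x1 x2 x3. 1 + x1 + x2 + x3 + x2 * x3) = integral\<^sup>L (lborel \<Otimes>\<^sub>M lborel) (\<lambda>z. f (fst z) (snd z))"
  proof -
    have "mahler_measure3 (\<lambda>x1 x2 x3. 1 + x1 + x2 + x3 + x2 * x3) =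
        integral\<^sup>L (lborel \<Otimes>\<^sub>M lborel) (\<lambda>t. indicator ({0..1} \<times> {0..1} \<times> {0..1}) t *\<^sub>R
          ln (cmod (1 + cis (2 * pi * fst t) + cis (2 * pi * fst (snd t)) + cis (2 * pi * snd (snd t)) +
            cis (2 * pi * fst (snd t)) * cis (2 * pi * snd (snd t)))))"
      unfolding mahler_measure3_def set_lebesgue_integral_def lborel_prod ..
    also have "\<dots> = integral\<^sup>L (lborel \<Otimes>\<^sub>M lborel) (\<lambda>z. f (fst z) (snd z))"
    proof (intro Bochner_Integration.integral_cong refl)
      fix t :: "real \<times> real \<times> real"
      have e1: "1 + cis (2 * pi * fst t) + cis (2 * pi * fst (snd t)) + cis (2 * pi * snd (snd t)) +
            cis (2 * pi * fst (snd t)) * cis (2 * pi * snd (snd t)) = cis (2*pi* fst t) + W (snd t)"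
        unfolding W_def by (simp add: algebra_simps)
      have e2: "indicator ({0..1} \<times> {0..1} \<times> {0..1}) t = (indicator {0..1} (fst t) * indicator B2 (snd t) :: real)"
        unfolding B2_def by (cases t) (simp add: indicator_times)
      show "indicator ({0..1} \<times> {0..1} \<times> {0..1}) t *\<^sub>R
          ln (cmod (1 + cis (2 * pi * fst t) + cis (2 * pi * fst (snd t)) + cis (2 * pi * snd (snd t)) +
            cis (2 * pi * fst (snd t)) * cis (2 * pi * snd (snd t)))) = f (fst t) (snd t)"
        unfolding f_def L_def e1 e2 by (simp add: mult.assoc)
    qed
    finally show ?thesis .
  qed
  have inner_bound: "AE y in lborel. (\<integral>\<^sup>+x. ennreal (norm (f x y)) \<partial>lborel) \<le> ennreal (2 * ln 5) * indicator B2 y"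
    using AEW
  proof eventually_elim
    case (elim y)
    show ?case
    proof (cases "y \<in> B2")
      case True
      then have "cmod (W y) \<noteq> 1" using elim by auto
      from inner_jensen(3)[OF this W4[of y]] True show ?thesis
        by (simp add: f_def L_def)
    next
      case False
      then show ?thesis by (simp add: f_def)
    qed
  qed
  have integ: "integrable (lborel \<Otimes>\<^sub>M lborel) (\<lambda>z. f (fst z) (snd z))"
  proof (rule integrableI_bounded)
    show "(\<lambda>z. f (fst z) (snd z)) \<in> borel_measurable (lborel \<Otimes>\<^sub>M lborel)" by (rule mf)
    have "(\<integral>\<^sup>+z. ennreal (norm (f (fst z) (snd z))) \<partial>(lborel \<Otimes>\<^sub>M lborel)) =
          (\<integral>\<^sup>+y. (\<integral>\<^sup>+x. ennreal (norm (f x y)) \<partial>lborel) \<partial>lborel)"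
    proof -
      have mn: "(\<lambda>z. ennreal (norm (f (fst z) (snd z)))) \<in> borel_measurable (lborel \<Otimes>\<^sub>M lborel)" by measurable
      from lborel_pair.nn_integral_snd[OF mn] show ?thesis by simp
    qed
    also have "\<dots> \<le> (\<integral>\<^sup>+y. ennreal (2 * ln 5) * indicator B2 y \<partial>lborel)"
      by (rule nn_integral_mono_AE[OF inner_bound])
    also have "\<dots> = ennreal (2 * ln 5) * emeasure lborel B2"
      by (subst nn_integral_cmult) auto
    also have "\<dots> < \<infinity>"
    proof -
      have "bounded B2" unfolding B2_def by (intro bounded_Times) auto
      then have "emeasure lborel B2 < \<infinity>" by (rule emeasure_bounded_finite)
      then show ?thesis by (simp add: ennreal_mult_less_top)
    qed
    finally show "(\<integral>\<^sup>+z. ennreal (norm (f (fst z) (snd z))) \<partial>(lborel \<Otimes>\<^sub>M lborel)) < \<infinity>" .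
  qed
  have step2: "integral\<^sup>L (lborel \<Otimes>\<^sub>M lborel) (\<lambda>z. f (fst z) (snd z)) = (\<integral>y. (\<integral>x. f x y \<partial>lborel) \<partial>lborel)"
    using lborel_pair.integral_snd[of f] integ by (simp add: case_prod_beta')
  have m2: "(\<lambda>y. indicator B2 y * lp (aa (fst y) * aa (snd y))) \<in> borel_measurable (lborel :: (real \<times> real) measure)"
  proof -
    have "(\<lambda>y. indicator {0..1::real} (fst y) * indicator {0..1::real} (snd y) * lp (aa (fst y) * aa (snd y))) \<in> borel_measurable (lborel \<Otimes>\<^sub>M lborel :: (real \<times> real) measure)"
      by measurable
    moreover have "indicator B2 y = indicator {0..1::real} (fst y) * (indicator {0..1::real} (snd y) :: real)" for y
      unfolding B2_def by (cases y) (simp add: indicator_times)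
    ultimately have "(\<lambda>y. indicator B2 y * lp (aa (fst y) * aa (snd y))) \<in> borel_measurable (lborel \<Otimes>\<^sub>M lborel :: (real \<times> real) measure)"
      by simp
    then show ?thesis unfolding lborel_prod .
  qed
  have m1: "(\<lambda>y. \<integral>x. f x y \<partial>lborel) \<in> borel_measurable (lborel :: (real \<times> real) measure)"
    using lborel_pair.integrable_snd[of f] integ by (simp add: case_prod_beta')
  have step3: "(\<integral>y. (\<integral>x. f x y \<partial>lborel) \<partial>lborel) = (\<integral>y. indicator B2 y * lp (aa (fst y) * aa (snd y)) \<partial>(lborel :: (real \<times> real) measure))"
  proof (rule integral_cong_AE)
    show "AE y in lborel. (\<integral>x. f x y \<partial>lborel) = indicator B2 y * lp (aa (fst y) * aa (snd y))"
      using AEW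
    proof eventually_elim
      case (elim y)
      show ?case
      proof (cases "y \<in> B2")
        case True
        then have "cmod (W y) \<noteq> 1" using elim by auto
        from inner_jensen(2)[OF this W4[of y]] True show ?thesis
          by (simp add: f_def L_def lp_def cmW)
      next
        case False
        then show ?thesis by (simp add: f_def)
      qed
    qed
  qed (use m1 m2 in auto)
  have step4: "(\<integral>y. indicator B2 y * lp (aa (fst y) * aa (snd y)) \<partial>(lborel :: (real \<times> real) measure)) =
     enn2real (\<integral>\<^sup>+y. ennreal (indicator B2 y * lp (aa (fst y) * aa (snd y))) \<partial>lborel)"
    by (rule integral_eq_nn_integral[OF m2]) (auto simp: lp_nonneg)
  have step5: "(\<integral>\<^sup>+y. ennreal (indicator B2 y * lp (aa (fst y) * aa (snd y))) \<partial>(lborel :: (real \<times> real) measure)) =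
     (\<integral>\<^sup>+s. (\<integral>\<^sup>+t. ennreal (lp (aa s * aa t)) * indicator {0..1} t \<partial>lborel) * indicator {0..1} s \<partial>lborel)"
  proof -
    have "(\<integral>\<^sup>+y. ennreal (indicator B2 y * lp (aa (fst y) * aa (snd y))) \<partial>(lborel :: (real \<times> real) measure)) =
      (\<integral>\<^sup>+y. ennreal (indicator B2 y * lp (aa (fst y) * aa (snd y))) \<partial>(lborel \<Otimes>\<^sub>M lborel))"
      unfolding lborel_prod ..
    also have "\<dots> = (\<integral>\<^sup>+s. (\<integral>\<^sup>+t. ennreal (indicator B2 (s, t) * lp (aa s * aa t)) \<partial>lborel) \<partial>lborel)"
    proof -
      have mn: "(\<lambda>y. ennreal (indicator B2 y * lp (aa (fst y) * aa (snd y)))) \<in> borel_measurable (lborel \<Otimes>\<^sub>M lborel)" by measurable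
      from lborel.nn_integral_fst[OF mn] show ?thesis by simp
    qed
    also have "\<dots> = (\<integral>\<^sup>+s. (\<integral>\<^sup>+t. ennreal (lp (aa s * aa t)) * indicator {0..1} t \<partial>lborel) * indicator {0..1} s \<partial>lborel)"
    proof (intro nn_integral_cong)
      fix s :: real
      show "(\<integral>\<^sup>+t. ennreal (indicator B2 (s, t) * lp (aa s * aa t)) \<partial>lborel) =
            (\<integral>\<^sup>+t. ennreal (lp (aa s * aa t)) * indicator {0..1} t \<partial>lborel) * indicator {0..1} s"
      proof (cases "s \<in> {0..1}")
        case True
        then have i1: "indicator {0..1} s = (1::ennreal)" by simp
        show ?thesis unfolding i1 mult_1_right
          by (intro nn_integral_cong) (use True in \<open>auto simp: B2_def indicator_def\<close>)
      next
        case False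
        then have "indicator B2 (s, t) = (0::real)" for t by (auto simp: B2_def indicator_def)
        then show ?thesis using False by simp
      qed
    qed
    finally show ?thesis .
  qed
  show ?thesis using step1 step2 step3 step4 step5 by simp
qed

lemma aa_sqrt: "aa s * aa t = 4 * sqrt (cos (pi * s)^2 * cos (pi * t)^2)"
  unfolding aa_cos by (simp add: real_sqrt_mult)

lemma Q_eq:
  "(\<integral>\<^sup>+s. (\<integral>\<^sup>+t. ennreal (lp (aa s * aa t)) * indicator {0..1} t \<partial>lborel) * indicator {0..1} s \<partial>lborel)
   = J (\<lambda>a b. ennreal (lp (4 * sqrt (a * b))))"
proof -
  have inner: "(\<integral>\<^sup>+t. ennreal (lp (aa s * aa t)) * indicator {0..1} t \<partial>lborel) =
     (\<lambda>a. \<integral>\<^sup>+b. ennreal (lp (4 * sqrt (a * b))) * ennreal (wA b) * indicator {0..1} b \<partial>lborel) (cos (pi * s)^2)" for s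
  proof -
    have "(\<integral>\<^sup>+t. ennreal (lp (aa s * aa t)) * indicator {0..1} t \<partial>lborel) =
       (\<integral>\<^sup>+t. (\<lambda>b. ennreal (lp (4 * sqrt (cos (pi * s)^2 * b)))) (cos (pi * t)^2) * indicator {0..1} t \<partial>lborel)"
      by (simp add: aa_sqrt)
    also have "\<dots> = (\<integral>\<^sup>+b. ennreal (lp (4 * sqrt (cos (pi * s)^2 * b))) * ennreal (wA b) * indicator {0..1} b \<partial>lborel)"
      by (rule arcsine_subst) measurable
    finally show ?thesis by simp
  qed
  have "(\<integral>\<^sup>+s. (\<integral>\<^sup>+t. ennreal (lp (aa s * aa t)) * indicator {0..1} t \<partial>lborel) * indicator {0..1} s \<partial>lborel) =
     (\<integral>\<^sup>+s. (\<lambda>a. \<integral>\<^sup>+b. ennreal (lp (4 * sqrt (a * b))) * ennreal (wA b) * indicator {0..1} b \<partial>lborel) (cos (pi * s)^2) * indicator {0..1} s \<partial>lborel)"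
    by (simp only: inner)
  also have "\<dots> = J (\<lambda>a b. ennreal (lp (4 * sqrt (a * b))))"
    unfolding J_def by (rule arcsine_subst) measurable
  finally show ?thesis .
qed

theorem theorem2:
  shows "mahler_measure3 (\<lambda>x1 x2 x3. 1 + x1 + x2 + x3 + x2 * x3) =
    - 1 / (2 * pi) *
      (LINT x : {0..1} | lborel. hyp2F1 (1/2) (1/2) 1 (1 - x\<^sup>2 / 16) * ln x)"
proof -
  define R where "R = (\<integral>\<^sup>+x. ennreal (indicator {0..1} x * (- (hyp2F1 (1/2) (1/2) 1 (1 - x^2/16) * ln x))) \<partial>lborel)"
  have "J (\<lambda>a b. ennreal (lp (4 * sqrt (a * b)))) = J (\<lambda>a b. ennreal (Psi (a * b)))"
    by (rule J_lp_Psi)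
  also have "\<dots> = (\<integral>\<^sup>+g. ennreal (Psi g) * ennreal (hyp2F1 (1/2) (1/2) 1 (1 - g) / (pi * sqrt g)) * indicator {0..1} g \<partial>lborel)"
    unfolding J_def by (rule N2)
  also have "\<dots> = (\<integral>\<^sup>+x. ennreal (1 / (2*pi)) * ennreal (indicator {0..1} x * (- (hyp2F1 (1/2) (1/2) 1 (1 - x^2/16) * ln x))) \<partial>lborel)"
    by (rule N1)
  also have "\<dots> = ennreal (1 / (2*pi)) * R"
    unfolding R_def by (rule nn_integral_cmult) measurable
  finally have QR: "J (\<lambda>a b. ennreal (lp (4 * sqrt (a * b)))) = ennreal (1 / (2*pi)) * R" .
  have L: "mahler_measure3 (\<lambda>x1 x2 x3. 1 + x1 + x2 + x3 + x2 * x3) = 1 / (2*pi) * enn2real R"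
    unfolding LHS_eq Q_eq QR by (simp add: enn2real_mult)
  have "(LINT x : {0..1} | lborel. hyp2F1 (1/2) (1/2) 1 (1 - x\<^sup>2 / 16) * ln x) =
        - (\<integral>x. indicator {0..1} x * (- (hyp2F1 (1/2) (1/2) 1 (1 - x^2/16) * ln x)) \<partial>lborel)"
    unfolding set_lebesgue_integral_def by (simp flip: integral_minus)
  also have "(\<integral>x. indicator {0..1} x * (- (hyp2F1 (1/2) (1/2) 1 (1 - x^2/16) * ln x)) \<partial>lborel) = enn2real R"
    unfolding R_def
  proof (rule integral_eq_nn_integral)
    show "(\<lambda>x. indicator {0..1} x * (- (hyp2F1 (1/2) (1/2) 1 (1 - x^2/16) * ln x))) \<in> borel_measurable lborel"
      by measurable
    show "AE x in lborel. 0 \<le> indicator {0..1} x * (- (hyp2F1 (1/2) (1/2) 1 (1 - x^2/16) * ln (x::real)))"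
    proof (rule AE_I2)
      fix x :: real
      show "0 \<le> indicator {0..1} x * (- (hyp2F1 (1/2) (1/2) 1 (1 - x^2/16) * ln x))"
      proof (cases "x \<in> {0<..1}")
        case True
        then have x: "0 < x" "x \<le> 1" by auto
        have "x^2 \<le> 1" using x by (simp add: power_le_one)
        then have "0 \<le> hyp2F1 (1/2) (1/2) 1 (1 - x^2/16)" using x by (intro H_nonneg) auto
        moreover have "ln x \<le> 0" using x by simp
        ultimately show ?thesis using True by (simp add: mult_nonneg_nonpos)
      next
        case False
        then show ?thesis by (cases "x = 0") (auto simp: indicator_def)
      qed
    qed
  qed
  finally have Rr: "(LINT x : {0..1} | lborel. hyp2F1 (1/2) (1/2) 1 (1 - x\<^sup>2 / 16) * ln x) = - enn2real R" .
  show ?thesis unfolding L Rr by simp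
qed

end
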